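(* Consider the client selection problem and the COCS policy described in the context, run with $K(t)=t^{z}\log(t)$ and $h_T=\lceil T^{\gamma}\rceil$, where $0<z<1$ and $0<\gamma<\frac12$. Suppose the Hölder condition holds with constants $L>0,\alpha>0$, and suppose there are a function $H$ with $H(t)>\frac{NMB}{c^{\min}}t^{-z/2}$ and constants $A>0$, $\theta<0$ such that for all $t$, $$2H(t)+\frac{2NMB}{c^{\min}}L2^{\alpha/2}h_T^{-\alpha}\le At^{\theta}.$$ Then $$\mathbb{E}[R(T)]\le \frac{4N^2MB}{c^{\min}}\left(T^{z+2\gamma}\log(T)+T^{2\gamma}\right)+\frac{NMB}{c^{\min}}\Big(\sum_{k=1}^{B/c^{\min}}\binom{N}{k}\Big)\frac{\pi^2}{3}+\frac{3NMB}{c^{\min}}L2^{\alpha/2}T^{1-\gamma\alpha}+\frac{A}{1+\theta}T^{1+\theta},$$ where $c^{\min}=\min_{n,t}c_n(y_n^t)$.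
   Context: Setting. There are $N$ clients indexed by $\mathcal N=\{1,\dots,N\}$, $M$ edge servers (ESs) indexed by $\mathcal M=\{1,\dots,M\}$, and rounds $t=1,\dots,T$. In round $t$, ES $m$ can communicate with a set $\mathcal N_m^t\subseteq\mathcal N$ of clients (these sets may overlap). Each client $n$ reveals computation resources $y_n^t$ and charges a cost $c_n(y_n^t)>0$, with $c_n$ nondecreasing; $c^{\min}=\min_{n,t}c_n(y_n^t)$. Each ES has budget $B>0$. A feasible client selection decision in round $t$ is $\bm s^t=(\bm s_1^t,\dots,\bm s_M^t)$ with $\bm s_m^t\subseteq\mathcal N_m^t$, $\sum_{n\in\bm s_m^t}c_n(y_n^t)\le B$ for every $m$, and $\bm s_m^t\cap\bm s_{m'}^t=\emptyset$ for $m\neq m'$. Each client-ES pair $(n,m)$ with $n\in\mathcal N_m^t$ has an observed context $\phi_{n,m}^t\in\Phi=[0,1]^2$. If client $n$ is selected by ES $m$ in round $t$, its participation indicator $X_{n,m}^t\in\{0,1\}$ is Bernoulli with mean $p_{n,m}(\phi_{n,m}^t)$, where $p_{n,m}:\Phi\to[0,1]$ is unknown. The utility is $\mu(\bm s^t;\bm X^t)=\frac1M\sum_{m\in\mathcal M}\sum_{n\in\bm s_m^t}X_{n,m}^t$ (and $\mu(\bm s;\bm p^t)$ is the same with $p_{n,m}(\phi^t_{n,m})$ in place of $X^t_{n,m}$). The oracle decision $\bm s^{\mathrm{opt},t}$ maximizes $\mu(\bm s;\bm p^t)$ over feasible decisions. The expected regret of the policy choosing $\bm s^1,\dots,\bm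 s^T$ is $\mathbb E[R(T)]=\sum_{t=1}^T(\mathbb E[\mu(\bm s^{\mathrm{opt},t};\bm X^t)]-\mathbb E[\mu(\bm s^t;\bm X^t)])$. Hölder condition: there exist $L>0,\alpha>0$ with $|p_{n,m}(\phi)-p_{n,m}(\phi')|\le L\|\phi-\phi'\|^{\alpha}$ for all $\phi,\phi'\in\Phi$ and all pairs $(n,m)$ (Euclidean norm). COCS policy (inputs: increasing function $K$, integer $h_T$). Partition $\Phi$ into $h_T^2$ squares of side $1/h_T$. For each pair $(n,m)$ and square $l$ keep a counter $C_{n,m}(l)$ (initially $0$) and an estimate $\hat p_{n,m}(l)$ equal to the sample mean of indicators observed when $n$ was selected by $m$ with context in $l$. In round $t$: observe contexts, let $l^t_{n,m}$ be the square containing $\phi^t_{n,m}$, set $\hat X^t_{n,m}=\hat p_{n,m}(l^t_{n,m})$; a pair is under-explored if $C_{n,m}(l^t_{n,m})\le K(t)$. If an under-explored pair exists (exploration round), select a feasible decision that first maximizes the number of selected under-explored clients and then spends remaining per-ES budget on explored clients maximizing $\mu(\cdot;\hat{\bm X}^t)$. Otherwise (exploitation round), select a feasible $\bm s^t$ maximizing $\mu(\bm s;\hat{\bm X}^t)$. At the end of the round, for each selected pair observe $X^t_{n,m}$ and update $\hat p_{n,m}(l^t_{n,m})$ (running mean) and $C_{n,m}(l^t_{n,m})$ (increment). *)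

theory Defs
  imports "HOL-Analysis.Analysis" "HOL-Probability.Probability"
begin

text \<open>Clients are 1..N, edge servers 1..M, rounds 1..T.
  A decision is a function s :: nat => nat set, s m = clients selected by ES m.
  Nb m t = clients ES m can reach in round t; cost n t = c_n(y_n^t).\<close>

type_synonym decision = "nat \<Rightarrow> nat set"

definition Phi :: "(real \<times> real) set" where
  "Phi = {0..1} \<times> {0..1}"

definition feasible ::
  "nat \<Rightarrow> (nat \<Rightarrow> nat \<Rightarrow> nat set) \<Rightarrow> (nat \<Rightarrow> nat \<Rightarrow> real) \<Rightarrow> real \<Rightarrow> nat \<Rightarrow> decision \<Rightarrow> bool"
where
  "feasible M Nb cost B t s \<longleftrightarrow>
     (\<forall>m. m \<notin> {1..M} \<longrightarrow> s m = {}) \<and>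
     (\<forall>m\<in>{1..M}. s m \<subseteq> Nb m t \<and> (\<Sum>n\<in>s m. cost n t) \<le> B) \<and>
     (\<forall>m\<in>{1..M}. \<forall>m'\<in>{1..M}. m \<noteq> m' \<longrightarrow> s m \<inter> s m' = {})"

definition util :: "nat \<Rightarrow> decision \<Rightarrow> (nat \<Rightarrow> nat \<Rightarrow> real) \<Rightarrow> real" where
  "util M s q = (1 / real M) * (\<Sum>m=1..M. \<Sum>n\<in>s m. q n m)"

text \<open>Boundary points are assigned to the square with the
  larger index (except at coordinate 1, assigned to index h-1).\<close>
definition cell :: "nat \<Rightarrow> real \<Rightarrow> nat" where
  "cell h x = min (nat \<lfloor>x * real h\<rfloor>) (h - 1)"

definition square :: "nat \<Rightarrow> real \<times> real \<Rightarrow> nat \<times> nat" where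
  "square h \<phi> = (cell h (fst \<phi>), cell h (snd \<phi>))"

text \<open>Outcome omega (t,n,m) = participation indicator X^t_{n,m}.
  A history hs is the list of past decisions: hs ! i is the decision of round i+1.\<close>
definition obs_rounds ::
  "(nat \<Rightarrow> nat \<Rightarrow> nat \<Rightarrow> real \<times> real) \<Rightarrow> nat \<Rightarrow> decision list \<Rightarrow> nat \<Rightarrow> nat \<Rightarrow> nat \<times> nat \<Rightarrow> nat set"
where
  "obs_rounds phi h hs n m l =
     {i. i < length hs \<and> n \<in> (hs ! i) m \<and> square h (phi n m (Suc i)) = l}"

definition counter ::
  "(nat \<Rightarrow> nat \<Rightarrow> nat \<Rightarrow> real \<times> real) \<Rightarrow> nat \<Rightarrow> decision list \<Rightarrow> nat \<Rightarrow> nat \<Rightarrow> nat \<times> nat \<Rightarrow> nat"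
where
  "counter phi h hs n m l = card (obs_rounds phi h hs n m l)"

text \<open>Estimate hat p_{n,m}(l): sample mean of observed indicators (0 if no sample).\<close>
definition estimate ::
  "(nat \<Rightarrow> nat \<Rightarrow> nat \<Rightarrow> real \<times> real) \<Rightarrow> nat \<Rightarrow> (nat \<times> nat \<times> nat \<Rightarrow> bool) \<Rightarrow> decision list
     \<Rightarrow> nat \<Rightarrow> nat \<Rightarrow> nat \<times> nat \<Rightarrow> real"
where
  "estimate phi h \<omega> hs n m l =
     (\<Sum>i\<in>obs_rounds phi h hs n m l. of_bool (\<omega> (Suc i, n, m))) / real (counter phi h hs n m l)"

definition cocs_rule ::
  "nat \<Rightarrow> (nat \<Rightarrow> nat \<Rightarrow> nat set) \<Rightarrow> (nat \<Rightarrow> nat \<Rightarrow> real) \<Rightarrow> real \<Rightarrow>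
   (nat \<Rightarrow> nat \<Rightarrow> nat \<Rightarrow> real \<times> real) \<Rightarrow> nat \<Rightarrow> (real \<Rightarrow> real) \<Rightarrow> nat \<Rightarrow>
   (nat \<Rightarrow> nat \<Rightarrow> nat \<times> nat \<Rightarrow> nat) \<Rightarrow> (nat \<Rightarrow> nat \<Rightarrow> nat \<times> nat \<Rightarrow> real) \<Rightarrow> decision \<Rightarrow> bool"
where
  "cocs_rule M Nb cost B phi h K t C P s \<longleftrightarrow>
     (let UE = (\<lambda>m. {n \<in> Nb m t. real (C n m (square h (phi n m t))) \<le> K (real t)});
          Xh = (\<lambda>n m. P n m (square h (phi n m t)));
          nUE = (\<lambda>s'. \<Sum>m=1..M. card (s' m \<inter> UE m))
      in feasible M Nb cost B t s \<and>
         (if (\<exists>m\<in>{1..M}. UE m \<noteq> {}) then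
            (\<forall>s'. feasible M Nb cost B t s' \<longrightarrow> nUE s' \<le> nUE s) \<and>
            (\<forall>s'. feasible M Nb cost B t s' \<and> (\<forall>m\<in>{1..M}. s' m \<inter> UE m = s m \<inter> UE m) \<longrightarrow>
                  util M (\<lambda>m. s' m - UE m) Xh \<le> util M (\<lambda>m. s m - UE m) Xh)
          else
            (\<forall>s'. feasible M Nb cost B t s' \<longrightarrow> util M s' Xh \<le> util M s Xh)))"

text \<open>Running the policy: sel t C P is the decision taken in round t given the
  current counters and estimates.\<close>
primrec history ::
  "(nat \<Rightarrow> (nat \<Rightarrow> nat \<Rightarrow> nat \<times> nat \<Rightarrow> nat) \<Rightarrow> (nat \<Rightarrow> nat \<Rightarrow> nat \<times> nat \<Rightarrow> real) \<Rightarrow> decision) \<Rightarrow>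
   (nat \<Rightarrow> nat \<Rightarrow> nat \<Rightarrow> real \<times> real) \<Rightarrow> nat \<Rightarrow> (nat \<times> nat \<times> nat \<Rightarrow> bool) \<Rightarrow> nat \<Rightarrow> decision list"
where
  "history sel phi h \<omega> 0 = []"
| "history sel phi h \<omega> (Suc k) =
     history sel phi h \<omega> k @
       [sel (Suc k) (counter phi h (history sel phi h \<omega> k))
                       (estimate phi h \<omega> (history sel phi h \<omega> k))]"

definition policy_dec ::
  "(nat \<Rightarrow> (nat \<Rightarrow> nat \<Rightarrow> nat \<times> nat \<Rightarrow> nat) \<Rightarrow> (nat \<Rightarrow> nat \<Rightarrow> nat \<times> nat \<Rightarrow> real) \<Rightarrow> decision) \<Rightarrow>
   (nat \<Rightarrow> nat \<Rightarrow> nat \<Rightarrow> real \<times> real) \<Rightarrow> nat \<Rightarrow> (nat \<times> nat \<times> nat \<Rightarrow> bool) \<Rightarrow> nat \<Rightarrow> decision"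
where
  "policy_dec sel phi h \<omega> t =
     sel t (counter phi h (history sel phi h \<omega> (t - 1)))
              (estimate phi h \<omega> (history sel phi h \<omega> (t - 1)))"

definition outcome_pmf ::
  "nat \<Rightarrow> nat \<Rightarrow> nat \<Rightarrow> (nat \<Rightarrow> nat \<Rightarrow> real \<times> real \<Rightarrow> real) \<Rightarrow> (nat \<Rightarrow> nat \<Rightarrow> nat \<Rightarrow> real \<times> real)
     \<Rightarrow> (nat \<times> nat \<times> nat \<Rightarrow> bool) pmf"
where
  "outcome_pmf N M T p phi =
     Pi_pmf ({1..T} \<times> {1..N} \<times> {1..M}) False
       (\<lambda>(t, n, m). bernoulli_pmf (p n m (phi n m t)))"

definition Xvec :: "(nat \<times> nat \<times> nat \<Rightarrow> bool) \<Rightarrow> nat \<Rightarrow> nat \<Rightarrow> nat \<Rightarrow> real" where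
  "Xvec \<omega> t n m = of_bool (\<omega> (t, n, m))"

end

theory Submission
  imports Defs
begin


lemma finite_set_Pi_pmf_bool:
  assumes "finite I"
  shows "finite (set_pmf (Pi_pmf I False (F :: 'a \<Rightarrow> bool pmf)))"
proof -
  have "set_pmf (Pi_pmf I False F) \<subseteq> PiE_dflt I False (\<lambda>_. UNIV)"
    using set_Pi_pmf_subset[OF assms, of False F] by (force simp: PiE_dflt_def)
  moreover have "finite (PiE_dflt I False (\<lambda>_. UNIV :: bool set))"
    using assms by (intro finite_PiE_dflt) auto
  ultimately show ?thesis by (rule finite_subset)
qed

lemma E_split:
  fixes F :: "'a \<Rightarrow> bool pmf" and h :: "('a \<Rightarrow> bool) \<Rightarrow> real"
  assumes fin: "finite I" and j: "j \<in> I"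
  shows "measure_pmf.expectation (Pi_pmf I False F) h =
    measure_pmf.expectation (Pi_pmf (I - {j}) False F)
       (\<lambda>g. measure_pmf.expectation (F j) (\<lambda>y. h (g(j:=y))))"
proof -
  have I: "I = insert j (I - {j})" using j by auto
  have fin': "finite (I - {j})" using fin by auto
  have "Pi_pmf I False F = Pi_pmf (insert j (I - {j})) False F" using I by simp
  also have "\<dots> = do {y \<leftarrow> F j; f \<leftarrow> Pi_pmf (I - {j}) False F; return_pmf (f(j := y))}"
    by (rule Pi_pmf_insert'[OF fin']) simp
  finally have eq: "Pi_pmf I False F = do {y \<leftarrow> F j; f \<leftarrow> Pi_pmf (I - {j}) False F; return_pmf (f(j := y))}" .
  have "measure_pmf.expectation (Pi_pmf I False F) h =
     (\<Sum>y\<in>UNIV. pmf (F j) y *\<^sub>R measure_pmf.expectation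
         (Pi_pmf (I - {j}) False F \<bind> (\<lambda>f. return_pmf (f(j := y)))) h)"
    unfolding eq
    by (rule pmf_expectation_bind) (auto intro: finite_set_Pi_pmf_bool[OF fin'])
  also have "\<dots> = (\<Sum>y\<in>UNIV. pmf (F j) y * measure_pmf.expectation
         (Pi_pmf (I - {j}) False F) (\<lambda>g. h (g(j := y))))"
    by (simp add: map_pmf_def[symmetric])
  also have "\<dots> = measure_pmf.expectation (Pi_pmf (I - {j}) False F)
         (\<lambda>g. \<Sum>y\<in>UNIV. pmf (F j) y * h (g(j := y)))"
    by (subst Bochner_Integration.integral_sum)
       (auto intro: integrable_measure_pmf_finite finite_set_Pi_pmf_bool[OF fin'])
  also have "\<dots> = measure_pmf.expectation (Pi_pmf (I - {j}) False F)
       (\<lambda>g. measure_pmf.expectation (F j) (\<lambda>y. h (g(j:=y))))"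
    by (subst integral_measure_pmf[of UNIV]) auto
  finally show ?thesis .
qed

lemma E_indep:
  fixes F :: "'a \<Rightarrow> bool pmf" and h :: "('a \<Rightarrow> bool) \<Rightarrow> real"
  assumes fin: "finite I" and j: "j \<in> I" and ind: "\<And>g y. h (g(j:=y)) = h g"
  shows "measure_pmf.expectation (Pi_pmf I False F) h =
    measure_pmf.expectation (Pi_pmf (I - {j}) False F) h"
  by (subst E_split[OF fin j]) (simp add: ind)

lemma E_bern:
  fixes F :: "'a \<Rightarrow> bool pmf" and f :: "('a \<Rightarrow> bool) \<Rightarrow> real"
  assumes fin: "finite I" and j: "j \<in> I" and ind: "\<And>g y. f (g(j:=y)) = f g"
    and Fj: "F j = bernoulli_pmf q" and q: "0 \<le> q" "q \<le> 1"
  shows "measure_pmf.expectation (Pi_pmf I False F) (\<lambda>\<omega>. f \<omega> * of_bool (\<omega> j)) =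
    measure_pmf.expectation (Pi_pmf I False F) f * q"
proof -
  have "measure_pmf.expectation (Pi_pmf I False F) (\<lambda>\<omega>. f \<omega> * of_bool (\<omega> j)) =
     measure_pmf.expectation (Pi_pmf (I - {j}) False F) (\<lambda>g. f g * q)"
    by (subst E_split[OF fin j]) (simp add: ind Fj q)
  also have "\<dots> = measure_pmf.expectation (Pi_pmf (I - {j}) False F) f * q" by simp
  also have "\<dots> = measure_pmf.expectation (Pi_pmf I False F) f * q"
    by (subst E_indep[OF fin j ind]) simp
  finally show ?thesis .
qed




lemma pot_step:
  fixes w c mu :: real
  assumes c: "c \<ge> 0" and cw: "c = 0 \<longrightarrow> w = 0" and mu: "0 \<le> mu" "mu \<le> 1"
  shows "mu * ((w + (1 - mu))\<^sup>2 / (c + 1) - ln (c + 2) / 2)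
       + (1 - mu) * ((w - mu)\<^sup>2 / (c + 1) - ln (c + 2) / 2) \<le> w\<^sup>2 / c - ln (c + 1) / 2"
proof -
  have eq: "mu * ((w + (1 - mu))\<^sup>2 / (c + 1) - ln (c + 2) / 2)
       + (1 - mu) * ((w - mu)\<^sup>2 / (c + 1) - ln (c + 2) / 2)
       = (w\<^sup>2 + mu * (1 - mu)) / (c + 1) - ln (c + 2) / 2"
  proof -
    have g: "\<And>a b X. mu * (a / (c + 1) - X) + (1 - mu) * (b / (c + 1) - X) = (mu * a + (1 - mu) * b) / (c + 1) - X"
      by (simp add: algebra_simps add_divide_distrib diff_divide_distrib)
    have s: "mu * (w + (1 - mu))\<^sup>2 + (1 - mu) * (w - mu)\<^sup>2 = w\<^sup>2 + mu * (1 - mu)"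
      by (simp add: power2_eq_square algebra_simps)
    show ?thesis by (subst g) (simp add: s)
  qed
  have m: "mu * (1 - mu) \<le> 1/4"
  proof -
    have "0 \<le> (mu - 1/2)\<^sup>2" by simp
    then show ?thesis by (simp add: power2_eq_square algebra_simps)
  qed
  have w: "w\<^sup>2 / (c + 1) \<le> w\<^sup>2 / c"
  proof (cases "c = 0")
    case True then show ?thesis using cw by simp
  next
    case False then show ?thesis using c by (intro divide_left_mono) auto
  qed
  have l1: "ln ((c + 1) / (c + 2)) \<le> (c + 1) / (c + 2) - 1"
    using c by (intro ln_le_minus_one) auto
  have l2: "ln ((c + 1) / (c + 2)) = ln (c + 1) - ln (c + 2)"
    using c by (simp add: ln_div)
  have l3: "(c + 1) / (c + 2) - 1 = - 1 / (c + 2)"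
    using c by (simp add: field_simps)
  have l4: "1 / (4 * (c + 1)) \<le> 1 / (2 * (c + 2))"
    using c by (simp add: field_simps)
  have "(w\<^sup>2 + mu * (1 - mu)) / (c + 1) \<le> w\<^sup>2 / (c + 1) + 1 / (4 * (c + 1))"
  proof -
    have "mu * (1 - mu) / (c + 1) \<le> (1/4) / (c + 1)"
      using m c by (intro divide_right_mono) auto
    then show ?thesis by (simp add: add_divide_distrib)
  qed
  moreover
  have A: "1 / (c + 2) \<le> ln (c + 2) - ln (c + 1)" using l1 l2 l3 by simp
  have B: "1 / (4 * (c + 1)) \<le> ln (c + 2) / 2 - ln (c + 1) / 2"
  proof -
    have "1 / (2 * (c + 2)) = (1 / (c + 2)) / 2" by simp
    also have "\<dots> \<le> (ln (c + 2) - ln (c + 1)) / 2" using A by (intro divide_right_mono) auto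
    finally show ?thesis using l4 by (simp add: diff_divide_distrib)
  qed
  ultimately show ?thesis unfolding eq using w B by linarith
qed

lemma am_gm_abs:
  fixes x a :: real
  assumes "a > 0"
  shows "\<bar>x\<bar> \<le> a * x\<^sup>2 + 1 / (4 * a)"
proof -
  have "0 \<le> a * (\<bar>x\<bar> - 1 / (2 * a))\<^sup>2" using assms by simp
  also have "a * (\<bar>x\<bar> - 1 / (2 * a))\<^sup>2 = a * x\<^sup>2 - \<bar>x\<bar> + 1 / (4 * a)"
    using assms by (simp add: power2_eq_square field_simps)
  finally show ?thesis by linarith
qed

lemma powr_step:
  fixes th :: real and t :: nat
  assumes th: "-1 < th" "th \<le> 0" and t: "t \<ge> 2"
  shows "real t powr th \<le> (real t powr (1 + th) - real (t - 1) powr (1 + th)) / (1 + th)"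
proof -
  have a: "real (t - 1) < real t" and a0: "0 < real (t - 1)" using t by auto
  have "\<exists>z. real (t - 1) < z \<and> z < real t \<and>
     real t powr (1 + th) - real (t - 1) powr (1 + th) = (real t - real (t - 1)) * ((1 + th) * z powr th)"
  proof (rule MVT2[OF a])
    fix x assume x: "real (t - 1) \<le> x" "x \<le> real t"
    then have "x > 0" using a0 by linarith
    then show "((\<lambda>x. x powr (1 + th)) has_real_derivative (1 + th) * x powr th) (at x)"
      using has_real_derivative_powr[of x "1 + th"] by simp
  qed
  then obtain z where z: "real (t - 1) < z" "z < real t"
    and eq: "real t powr (1 + th) - real (t - 1) powr (1 + th) = (real t - real (t - 1)) * ((1 + th) * z powr th)"
    by blast
  have d: "real t - real (t - 1) = 1" using t by auto
  have "real t powr th \<le> z powr th"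
    using z a0 th by (intro powr_mono2') auto
  moreover have "(real t powr (1 + th) - real (t - 1) powr (1 + th)) / (1 + th) = z powr th"
    unfolding eq d using th by simp
  ultimately show ?thesis by simp
qed

lemma sum_powr_le:
  fixes th :: real
  assumes th: "-1 < th" "th \<le> 0"
  shows "(\<Sum>t=1..T. real t powr th) \<le> real T powr (1 + th) / (1 + th)"
proof (induction T)
  case 0 then show ?case by simp
next
  case (Suc T)
  show ?case
  proof (cases "T = 0")
    case True
    have "1 \<le> 1 / (1 + th)" using th by (simp add: le_divide_eq)
    then show ?thesis using True by simp
  next
    case False
    have "real (Suc T) powr th \<le> (real (Suc T) powr (1 + th) - real (Suc T - 1) powr (1 + th)) / (1 + th)"
      using False th by (intro powr_step) auto
    moreover have "real (Suc T - 1) = real T" by simp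
    ultimately have "real (Suc T) powr th \<le> real (Suc T) powr (1 + th) / (1 + th) - real T powr (1 + th) / (1 + th)"
      by (simp add: diff_divide_distrib)
    then show ?thesis using Suc.IH by simp
  qed
qed



lemma integrable_Pi_bool[simp, intro]:
  "finite I \<Longrightarrow> integrable (measure_pmf (Pi_pmf I False (F :: 'a \<Rightarrow> bool pmf))) (f :: _ \<Rightarrow> real)"
  by (rule integrable_measure_pmf_finite, rule finite_set_Pi_pmf_bool)

section \<open>History\<close>

lemma length_history[simp]: "length (history sel phi h \<omega> k) = k"
  by (induction k) auto

lemma estimate_cong:
  assumes "\<forall>i a b. 0 < i \<longrightarrow> i \<le> length hs \<longrightarrow> \<omega> (i, a, b) = \<omega>' (i, a, b)"
  shows "estimate phi h \<omega> hs = estimate phi h \<omega>' hs"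
proof (intro ext)
  fix n m l
  have "\<And>i. i \<in> obs_rounds phi h hs n m l \<Longrightarrow> \<omega> (Suc i, n, m) = \<omega>' (Suc i, n, m)"
    using assms by (auto simp: obs_rounds_def)
  then have "(\<Sum>i\<in>obs_rounds phi h hs n m l. of_bool (\<omega> (Suc i, n, m)) :: real)
     = (\<Sum>i\<in>obs_rounds phi h hs n m l. of_bool (\<omega>' (Suc i, n, m)))"
    by (intro sum.cong refl) simp
  then show "estimate phi h \<omega> hs n m l = estimate phi h \<omega>' hs n m l"
    unfolding estimate_def by simp
qed

lemma history_cong:
  "\<forall>i a b. 0 < i \<longrightarrow> i \<le> k \<longrightarrow> \<omega> (i, a, b) = \<omega>' (i, a, b) \<Longrightarrow>
    history sel phi h \<omega> k = history sel phi h \<omega>' k"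
proof (induction k)
  case 0 then show ?case by simp
next
  case (Suc k)
  have IH: "history sel phi h \<omega> k = history sel phi h \<omega>' k"
    using Suc by auto
  have "estimate phi h \<omega> (history sel phi h \<omega> k) = estimate phi h \<omega>' (history sel phi h \<omega> k)"
    by (rule estimate_cong) (use Suc.prems in auto)
  then show ?case using IH by simp
qed

lemma nth_history:
  "i < k \<Longrightarrow> history sel phi h \<omega> k ! i = policy_dec sel phi h \<omega> (Suc i)"
proof (induction k)
  case 0 then show ?case by simp
next
  case (Suc k)
  then show ?case
    by (cases "i < k") (auto simp: nth_append policy_dec_def less_Suc_eq)
qed

lemma obs_rounds_history:
  "obs_rounds phi h (history sel phi h \<omega> k) n m l =
     {i. i < k \<and> n \<in> policy_dec sel phi h \<omega> (Suc i) m \<and> square h (phi n m (Suc i)) = l}"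
  by (auto simp: obs_rounds_def nth_history)

lemma policy_dec_cong:
  assumes "\<forall>i a b. 0 < i \<longrightarrow> i < t \<longrightarrow> \<omega> (i, a, b) = \<omega>' (i, a, b)"
  shows "policy_dec sel phi h \<omega> t = policy_dec sel phi h \<omega>' t"
proof -
  have a': "\<forall>i a b. 0 < i \<longrightarrow> i \<le> t - 1 \<longrightarrow> \<omega> (i, a, b) = \<omega>' (i, a, b)"
    using assms by auto
  have h: "history sel phi h \<omega> (t - 1) = history sel phi h \<omega>' (t - 1)"
    by (rule history_cong[OF a'])
  have e: "estimate phi h \<omega> (history sel phi h \<omega> (t - 1)) = estimate phi h \<omega>' (history sel phi h \<omega> (t - 1))"
    by (rule estimate_cong) (use a' in auto)
  show ?thesis unfolding policy_dec_def h e[unfolded h] ..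
qed


section \<open>Potential\<close>

definition Cn :: "_ \<Rightarrow> _ \<Rightarrow> nat \<Rightarrow> nat \<Rightarrow> nat \<Rightarrow> nat \<times> nat \<Rightarrow> nat \<Rightarrow> (nat \<times> nat \<times> nat \<Rightarrow> bool) \<Rightarrow> real" where
  "Cn sel phi h n0 m0 l k \<omega> = real (counter phi h (history sel phi h \<omega> k) n0 m0 l)"

definition Wn :: "_ \<Rightarrow> _ \<Rightarrow> nat \<Rightarrow> (nat \<Rightarrow> real) \<Rightarrow> nat \<Rightarrow> nat \<Rightarrow> nat \<times> nat \<Rightarrow> nat \<Rightarrow> (nat \<times> nat \<times> nat \<Rightarrow> bool) \<Rightarrow> real" where
  "Wn sel phi h mu n0 m0 l k \<omega> =
     (\<Sum>i\<in>obs_rounds phi h (history sel phi h \<omega> k) n0 m0 l. of_bool (\<omega> (Suc i, n0, m0)) - mu (Suc i))"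

lemma obs_finite: "finite (obs_rounds phi h hs n m l)"
  by (rule finite_subset[of _ "{..<length hs}"]) (auto simp: obs_rounds_def)

lemma obs_Suc:
  "obs_rounds phi h (history sel phi h \<omega> (Suc k)) n m l =
    obs_rounds phi h (history sel phi h \<omega> k) n m l \<union>
    {i. i = k \<and> n \<in> policy_dec sel phi h \<omega> (Suc k) m \<and> square h (phi n m (Suc k)) = l}"
  unfolding obs_rounds_history by (auto simp: less_Suc_eq)

lemma obs_lt: "i \<in> obs_rounds phi h (history sel phi h \<omega> k) n m l \<Longrightarrow> i < k"
  unfolding obs_rounds_history by auto

lemma Cn_Suc:
  "Cn sel phi h n0 m0 l (Suc k) \<omega> = Cn sel phi h n0 m0 l k \<omega> +
     of_bool (n0 \<in> policy_dec sel phi h \<omega> (Suc k) m0 \<and> square h (phi n0 m0 (Suc k)) = l)"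
  unfolding Cn_def counter_def obs_Suc
  by (subst card_Un_disjoint) (auto simp: obs_finite dest: obs_lt)

lemma Wn_Suc:
  "Wn sel phi h mu n0 m0 l (Suc k) \<omega> = Wn sel phi h mu n0 m0 l k \<omega> +
     of_bool (n0 \<in> policy_dec sel phi h \<omega> (Suc k) m0 \<and> square h (phi n0 m0 (Suc k)) = l) *
     (of_bool (\<omega> (Suc k, n0, m0)) - mu (Suc k))"
  unfolding Wn_def obs_Suc
  by (subst sum.union_disjoint) (auto simp: obs_finite dest: obs_lt)

lemma Cn_0_Wn: "Cn sel phi h n0 m0 l k \<omega> = 0 \<Longrightarrow> Wn sel phi h mu n0 m0 l k \<omega> = 0"
  unfolding Cn_def Wn_def counter_def using obs_finite by auto

lemma Cn_le: "Cn sel phi h n0 m0 l k \<omega> \<le> real k"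
proof -
  have "obs_rounds phi h (history sel phi h \<omega> k) n0 m0 l \<subseteq> {..<k}" by (auto dest: obs_lt)
  then have "card (obs_rounds phi h (history sel phi h \<omega> k) n0 m0 l) \<le> k"
    by (metis card_lessThan card_mono finite_lessThan)
  then show ?thesis unfolding Cn_def counter_def by simp
qed

lemma upd_agree:
  fixes \<omega> :: "nat \<times> nat \<times> nat \<Rightarrow> bool" and k i :: nat
  assumes "k < i"
  shows "\<forall>i' a b. 0 < i' \<longrightarrow> i' \<le> k \<longrightarrow> fun_upd \<omega> (i, n, m) y (i', a, b) = \<omega> (i', a, b)"
proof (intro allI impI)
  fix i' a b assume "0 < i'" "i' \<le> k"
  then have "(i', a, b) \<noteq> (i, n, m)" using assms by auto
  then show "fun_upd \<omega> (i, n, m) y (i', a, b) = \<omega> (i', a, b)" by (rule fun_upd_other)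
qed

lemma Cn_upd: "k < i \<Longrightarrow> Cn sel phi h n0 m0 l k (fun_upd \<omega> (i, n, m) y) = Cn sel phi h n0 m0 l k \<omega>"
  unfolding Cn_def by (subst history_cong[OF upd_agree]) auto

lemma Wn_upd: "k < i \<Longrightarrow> Wn sel phi h mu n0 m0 l k (fun_upd \<omega> (i, n, m) y) = Wn sel phi h mu n0 m0 l k \<omega>"
  unfolding Wn_def
  apply (subst history_cong[OF upd_agree], assumption)
  apply (intro sum.cong refl)
  apply (auto dest: obs_lt)
  done

lemma policy_upd: "t \<le> i \<Longrightarrow> policy_dec sel phi h (fun_upd \<omega> (i, n, m) y) t = policy_dec sel phi h \<omega> t"
  by (rule policy_dec_cong) auto

lemma potential:
  fixes F :: "nat \<times> nat \<times> nat \<Rightarrow> bool pmf"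
  assumes fin: "finite I"
    and jI: "\<And>i. i \<in> {1..T} \<Longrightarrow> (i, n0, m0) \<in> I"
    and Fi: "\<And>i. i \<in> {1..T} \<Longrightarrow> F (i, n0, m0) = bernoulli_pmf (mu i)"
    and mu: "\<And>i. i \<in> {1..T} \<Longrightarrow> 0 \<le> mu i \<and> mu i \<le> 1"
  shows "k \<le> T \<Longrightarrow> measure_pmf.expectation (Pi_pmf I False F)
     (\<lambda>\<omega>. (Wn sel phi h mu n0 m0 l k \<omega>)\<^sup>2 / Cn sel phi h n0 m0 l k \<omega>
          - ln (Cn sel phi h n0 m0 l k \<omega> + 1) / 2) \<le> 0"
proof (induction k)
  case 0
  then show ?case by (simp add: Cn_def Wn_def counter_def obs_rounds_def)
next
  case (Suc k)
  define j where "j = (Suc k, n0, m0)"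
  have j: "j \<in> I" using jI[of "Suc k"] Suc.prems by (auto simp: j_def)
  have Fj: "F j = bernoulli_pmf (mu (Suc k))" using Fi[of "Suc k"] Suc.prems by (auto simp: j_def)
  have m: "0 \<le> mu (Suc k)" "mu (Suc k) \<le> 1" using mu[of "Suc k"] Suc.prems by auto
  define C where "C = Cn sel phi h n0 m0 l k"
  define W where "W = Wn sel phi h mu n0 m0 l k"
  define q where "q = (\<lambda>\<omega>. n0 \<in> policy_dec sel phi h \<omega> (Suc k) m0 \<and> square h (phi n0 m0 (Suc k)) = l)"
  define \<Psi> where "\<Psi> = (\<lambda>\<omega>. (W \<omega>)\<^sup>2 / C \<omega> - ln (C \<omega> + 1) / 2)"
  have Cu: "\<And>g y. C (g(j := y)) = C g" unfolding C_def j_def by (rule Cn_upd) simp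
  have Wu: "\<And>g y. W (g(j := y)) = W g" unfolding W_def j_def by (rule Wn_upd) simp
  have qu: "\<And>g y. q (g(j := y)) = q g" unfolding q_def j_def by (subst policy_upd) auto
  have \<Psi>u: "\<And>g y. \<Psi> (g(j := y)) = \<Psi> g" unfolding \<Psi>_def using Cu Wu by simp
  have C0: "\<And>g. C g \<ge> 0" unfolding C_def Cn_def by simp
  have CW: "\<And>g. C g = 0 \<longrightarrow> W g = 0" unfolding C_def W_def using Cn_0_Wn by blast
  have step: "\<And>g. measure_pmf.expectation (F j)
      (\<lambda>y. (Wn sel phi h mu n0 m0 l (Suc k) (g(j := y)))\<^sup>2 / Cn sel phi h n0 m0 l (Suc k) (g(j := y))
          - ln (Cn sel phi h n0 m0 l (Suc k) (g(j := y)) + 1) / 2) \<le> \<Psi> g"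
  proof -
    fix g
    have e1: "\<And>y. Cn sel phi h n0 m0 l (Suc k) (g(j := y)) = C g + of_bool (q g)"
    proof -
      fix y
      have "Cn sel phi h n0 m0 l (Suc k) (g(j := y)) = C (g(j := y)) + of_bool (q (g(j := y)))"
        unfolding C_def q_def by (rule Cn_Suc)
      then show "Cn sel phi h n0 m0 l (Suc k) (g(j := y)) = C g + of_bool (q g)"
        by (simp only: Cu qu)
    qed
    have e2: "\<And>y. Wn sel phi h mu n0 m0 l (Suc k) (g(j := y)) = W g + of_bool (q g) * (of_bool y - mu (Suc k))"
    proof -
      fix y
      have "Wn sel phi h mu n0 m0 l (Suc k) (g(j := y)) = W (g(j := y)) + of_bool (q (g(j := y))) *
          (of_bool ((g(j := y)) (Suc k, n0, m0)) - mu (Suc k))"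
        unfolding W_def q_def by (rule Wn_Suc)
      moreover have "(g(j := y)) (Suc k, n0, m0) = y" by (simp add: j_def)
      ultimately show "Wn sel phi h mu n0 m0 l (Suc k) (g(j := y)) = W g + of_bool (q g) * (of_bool y - mu (Suc k))"
        by (simp only: Wu qu)
    qed
    show "?thesis g"
    proof (cases "q g")
      case True
      let ?mu = "mu (Suc k)"
      have "measure_pmf.expectation (F j)
        (\<lambda>y. (W g + of_bool (q g) * (of_bool y - ?mu))\<^sup>2 / (C g + of_bool (q g))
           - ln (C g + of_bool (q g) + 1) / 2)
        = ((W g + (1 - ?mu))\<^sup>2 / (C g + 1) - ln (C g + 2) / 2) * ?mu
          + ((W g - ?mu)\<^sup>2 / (C g + 1) - ln (C g + 2) / 2) * (1 - ?mu)"
        unfolding Fj using True m by (simp add: add.assoc)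
      also have "\<dots> \<le> \<Psi> g"
        using pot_step[OF C0[of g] CW[of g] m] unfolding \<Psi>_def by (simp add: mult.commute)
      finally show ?thesis unfolding e1 e2 .
    next
      case False
      then show ?thesis unfolding e1 e2 Fj using m by (simp add: \<Psi>_def)
    qed
  qed
  have "measure_pmf.expectation (Pi_pmf I False F)
     (\<lambda>\<omega>. (Wn sel phi h mu n0 m0 l (Suc k) \<omega>)\<^sup>2 / Cn sel phi h n0 m0 l (Suc k) \<omega>
          - ln (Cn sel phi h n0 m0 l (Suc k) \<omega> + 1) / 2)
     = measure_pmf.expectation (Pi_pmf (I - {j}) False F) (\<lambda>g. measure_pmf.expectation (F j)
      (\<lambda>y. (Wn sel phi h mu n0 m0 l (Suc k) (g(j := y)))\<^sup>2 / Cn sel phi h n0 m0 l (Suc k) (g(j := y))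
          - ln (Cn sel phi h n0 m0 l (Suc k) (g(j := y)) + 1) / 2))"
    by (rule E_split[OF fin j])
  also have "\<dots> \<le> measure_pmf.expectation (Pi_pmf (I - {j}) False F) \<Psi>"
    using fin by (intro integral_mono step) auto
  also have "\<dots> = measure_pmf.expectation (Pi_pmf I False F) \<Psi>"
    by (rule E_indep[OF fin j \<Psi>u, symmetric])
  also have "\<dots> \<le> 0" using Suc unfolding \<Psi>_def C_def W_def by simp
  finally show ?case .
qed


lemma est_decomp:
  assumes C: "counter phi h hs n0 m0 l > 0"
  shows "estimate phi h \<omega> hs n0 m0 l - mu0 =
    ((\<Sum>i\<in>obs_rounds phi h hs n0 m0 l. of_bool (\<omega> (Suc i, n0, m0)) - mu (Suc i))
     + (\<Sum>i\<in>obs_rounds phi h hs n0 m0 l. mu (Suc i) - mu0)) / real (counter phi h hs n0 m0 l)"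
proof -
  let ?O = "obs_rounds phi h hs n0 m0 l"
  have c: "real (counter phi h hs n0 m0 l) = real (card ?O)" by (simp add: counter_def)
  have "(\<Sum>i\<in>?O. of_bool (\<omega> (Suc i, n0, m0)) - mu (Suc i)) + (\<Sum>i\<in>?O. mu (Suc i) - mu0)
      = (\<Sum>i\<in>?O. of_bool (\<omega> (Suc i, n0, m0)) :: real) - real (card ?O) * mu0"
    by (simp add: sum_subtractf sum.distrib)
  then show ?thesis using C unfolding estimate_def c
    by (simp add: field_simps counter_def)
qed


lemma E_const_pmf[simp]: "measure_pmf.expectation M (\<lambda>_. c) = (c :: real)"
  by simp

lemma E_W2C:
  fixes F :: "nat \<times> nat \<times> nat \<Rightarrow> bool pmf"
  assumes fin: "finite I"
    and jI: "\<And>i. i \<in> {1..T} \<Longrightarrow> (i, n0, m0) \<in> I"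
    and Fi: "\<And>i. i \<in> {1..T} \<Longrightarrow> F (i, n0, m0) = bernoulli_pmf (mu i)"
    and mu: "\<And>i. i \<in> {1..T} \<Longrightarrow> 0 \<le> mu i \<and> mu i \<le> 1"
    and k: "k \<le> T"
  shows "measure_pmf.expectation (Pi_pmf I False F)
     (\<lambda>\<omega>. (Wn sel phi h mu n0 m0 l k \<omega>)\<^sup>2 / Cn sel phi h n0 m0 l k \<omega>) \<le> ln (real k + 1) / 2"
proof -
  let ?E = "measure_pmf.expectation (Pi_pmf I False F)"
  let ?C = "Cn sel phi h n0 m0 l k" and ?W = "Wn sel phi h mu n0 m0 l k"
  have p: "?E (\<lambda>\<omega>. (?W \<omega>)\<^sup>2 / ?C \<omega> - ln (?C \<omega> + 1) / 2) \<le> 0"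
    by (rule potential[where I=I and T=T and ?n0.0=n0 and ?m0.0=m0 and F=F and mu=mu and k=k
           and sel=sel and phi=phi and h=h and l=l, OF fin jI Fi mu k])
  have "?E (\<lambda>\<omega>. (?W \<omega>)\<^sup>2 / ?C \<omega>) =
     ?E (\<lambda>\<omega>. (?W \<omega>)\<^sup>2 / ?C \<omega> - ln (?C \<omega> + 1) / 2) + ?E (\<lambda>\<omega>. ln (?C \<omega> + 1) / 2)"
    by (subst Bochner_Integration.integral_add[symmetric]) (auto simp: fin)
  moreover have "?E (\<lambda>\<omega>. ln (?C \<omega> + 1) / 2) \<le> ?E (\<lambda>\<omega>. ln (real k + 1) / 2)"
  proof (rule integral_mono)
    fix \<omega>
    have "?C \<omega> \<le> real k" by (rule Cn_le)
    moreover have "?C \<omega> \<ge> 0" by (simp add: Cn_def)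
    ultimately show "ln (?C \<omega> + 1) / 2 \<le> ln (real k + 1) / 2" by simp
  qed (auto simp: fin)
  ultimately show ?thesis using p by simp
qed

lemma err_bound:
  fixes F :: "nat \<times> nat \<times> nat \<Rightarrow> bool pmf" and z b :: real
  assumes fin: "finite I"
    and jI: "\<And>i. i \<in> {1..T} \<Longrightarrow> (i, n0, m0) \<in> I"
    and Fi: "\<And>i. i \<in> {1..T} \<Longrightarrow> F (i, n0, m0) = bernoulli_pmf (mu i)"
    and mu: "\<And>i. i \<in> {1..T} \<Longrightarrow> 0 \<le> mu i \<and> mu i \<le> 1"
    and t: "t \<in> {1..T}"
    and bias: "\<And>i. i \<in> {1..T} \<Longrightarrow> square h (phi n0 m0 i) = l \<Longrightarrow> \<bar>mu i - mu t\<bar> \<le> b"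
    and b: "b \<ge> 0" and z: "z > 0"
  shows "measure_pmf.expectation (Pi_pmf I False F)
     (\<lambda>\<omega>. \<bar>estimate phi h \<omega> (history sel phi h \<omega> (t - 1)) n0 m0 l - mu t\<bar> *
          of_bool (real (counter phi h (history sel phi h \<omega> (t - 1)) n0 m0 l) > real t powr z * ln (real t)))
     \<le> real t powr (- z / 2) + b"
proof -
  let ?E = "measure_pmf.expectation (Pi_pmf I False F)"
  define C where "C = Cn sel phi h n0 m0 l (t - 1)"
  define W where "W = Wn sel phi h mu n0 m0 l (t - 1)"
  define K where "K = real t powr z * ln (real t)"
  define f where "f = (\<lambda>\<omega>. \<bar>estimate phi h \<omega> (history sel phi h \<omega> (t - 1)) n0 m0 l - mu t\<bar> *
          of_bool (real (counter phi h (history sel phi h \<omega> (t - 1)) n0 m0 l) > K))"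
  have Cc: "\<And>\<omega>. C \<omega> = real (counter phi h (history sel phi h \<omega> (t - 1)) n0 m0 l)"
    by (simp add: C_def Cn_def)
  show ?thesis
  proof (cases "t = 1")
    case True
    have "\<And>\<omega>. f \<omega> = 0" unfolding f_def K_def using True
      by (simp add: counter_def obs_rounds_def)
    then have "f = (\<lambda>_. 0)" by (rule ext)
    then have "?E f = 0" by simp
    moreover have "0 \<le> real t powr (- z / 2) + b" using b by simp
    ultimately show ?thesis unfolding f_def K_def by simp
  next
    case False
    then have t2: "t \<ge> 2" using t by auto
    have lt: "ln (real t) > 0" using t2 by simp
    have K0: "K > 0" unfolding K_def using lt t2 by simp
    define a where "a = real t powr (z / 2)"
    have a0: "a > 0" unfolding a_def using t2 by simp
    have pw: "\<And>\<omega>. f \<omega> \<le> (a / K) * ((W \<omega>)\<^sup>2 / C \<omega>) + 1 / (4 * a) + b"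
    proof -
      fix \<omega>
      have WC0: "(W \<omega>)\<^sup>2 / C \<omega> \<ge> 0" by (simp add: C_def Cn_def)
      show "?thesis \<omega>"
      proof (cases "C \<omega> > K")
        case False
        then have "f \<omega> = 0" unfolding f_def Cc by simp
        moreover have "0 \<le> (a / K) * ((W \<omega>)\<^sup>2 / C \<omega>)"
          by (rule mult_nonneg_nonneg) (use WC0 a0 K0 in auto)
        moreover have "0 \<le> 1 / (4 * a)" using a0 by simp
        ultimately show ?thesis using b by linarith
      next
        case True
        let ?O = "obs_rounds phi h (history sel phi h \<omega> (t - 1)) n0 m0 l"
        define D where "D = (\<Sum>i\<in>?O. mu (Suc i) - mu t)"
        have Cpos: "C \<omega> > 0" using True K0 by simp
        have cpos: "counter phi h (history sel phi h \<omega> (t - 1)) n0 m0 l > 0" using Cpos Cc by simp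
        have dec: "estimate phi h \<omega> (history sel phi h \<omega> (t - 1)) n0 m0 l - mu t = (W \<omega> + D) / C \<omega>"
          unfolding W_def Wn_def D_def Cc by (rule est_decomp[OF cpos])
        have "\<bar>D\<bar> \<le> (\<Sum>i\<in>?O. \<bar>mu (Suc i) - mu t\<bar>)" unfolding D_def by (rule sum_abs)
        also have "\<dots> \<le> (\<Sum>i\<in>?O. b)"
        proof (rule sum_mono)
          fix i assume i: "i \<in> ?O"
          then have "i < t - 1" "square h (phi n0 m0 (Suc i)) = l"
            by (auto simp: obs_rounds_def)
          then show "\<bar>mu (Suc i) - mu t\<bar> \<le> b" using t by (intro bias) auto
        qed
        also have "\<dots> = C \<omega> * b" by (simp add: Cc counter_def)
        finally have Db: "\<bar>D\<bar> \<le> C \<omega> * b" .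
        have "\<bar>(W \<omega> + D) / C \<omega>\<bar> \<le> \<bar>W \<omega> / C \<omega>\<bar> + \<bar>D\<bar> / C \<omega>"
          using Cpos by (simp add: add_divide_distrib abs_triangle_ineq[THEN order_trans])
        also have "\<bar>D\<bar> / C \<omega> \<le> b" using Db Cpos by (simp add: divide_le_eq mult.commute)
        also have "\<bar>W \<omega> / C \<omega>\<bar> \<le> a * (W \<omega> / C \<omega>)\<^sup>2 + 1 / (4 * a)" by (rule am_gm_abs[OF a0])
        also have "(W \<omega> / C \<omega>)\<^sup>2 = ((W \<omega>)\<^sup>2 / C \<omega>) * (1 / C \<omega>)"
          by (simp add: power2_eq_square)
        also have "((W \<omega>)\<^sup>2 / C \<omega>) * (1 / C \<omega>) \<le> ((W \<omega>)\<^sup>2 / C \<omega>) * (1 / K)"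
          using True K0 WC0 by (intro mult_left_mono) (auto simp: divide_simps)
        finally have "\<bar>(W \<omega> + D) / C \<omega>\<bar> \<le> a * (((W \<omega>)\<^sup>2 / C \<omega>) * (1 / K)) + 1 / (4 * a) + b"
          using a0 by (simp add: mult_left_mono)
        then show ?thesis unfolding f_def using True dec Cc by (simp add: mult.commute)
      qed
    qed
    have "?E f \<le> ?E (\<lambda>\<omega>. (a / K) * ((W \<omega>)\<^sup>2 / C \<omega>) + 1 / (4 * a) + b)"
      by (intro integral_mono integrable_Pi_bool fin pw)
    also have "\<dots> = (a / K) * ?E (\<lambda>\<omega>. (W \<omega>)\<^sup>2 / C \<omega>) + 1 / (4 * a) + b"
    proof -
      define c where "c = a / K"
      define d where "d = 1 / (4 * a) + b"
      define G where "G = (\<lambda>\<omega>. (W \<omega>)\<^sup>2 / C \<omega>)"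
      have "?E (\<lambda>\<omega>. c * G \<omega> + d) = ?E (\<lambda>\<omega>. c * G \<omega>) + ?E (\<lambda>\<omega>. d)"
        by (rule Bochner_Integration.integral_add) (auto simp: fin)
      also have "?E (\<lambda>\<omega>. c * G \<omega>) = c * ?E G" by (rule integral_mult_right_zero)
      finally have "?E (\<lambda>\<omega>. c * G \<omega> + d) = c * ?E G + d" by simp
      then show ?thesis unfolding c_def d_def G_def by (simp add: add.assoc)
    qed
    also have "\<dots> \<le> (a / K) * (ln (real (t - 1) + 1) / 2) + 1 / (4 * a) + b"
      unfolding W_def C_def using a0 K0 t
      by (intro add_mono mult_left_mono E_W2C[where I=I and T=T and ?n0.0=n0 and ?m0.0=m0 and F=F and mu=mu
           and sel=sel and phi=phi and h=h and l=l, OF fin jI Fi mu]) auto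
    also have "real (t - 1) + 1 = real t" using t by auto
    also have "(a / K) * (ln (real t) / 2) = real t powr (- z / 2) / 2"
    proof -
      have "(a / K) * (ln (real t) / 2) = a / real t powr z / 2"
        unfolding K_def using lt by (simp add: field_simps)
      also have "a / real t powr z = real t powr (- z / 2)"
      proof -
        have e: "real t powr (z / 2 - z) = real t powr (z / 2) / real t powr z" by (rule powr_diff)
        have "z / 2 - z = - z / 2" by simp
        then show ?thesis using e unfolding a_def by simp
      qed
      finally show ?thesis by simp
    qed
    also have "1 / (4 * a) = real t powr (- z / 2) / 4"
      unfolding a_def using t2 by (simp add: powr_minus_divide divide_divide_eq_left)
    finally have "?E f \<le> real t powr (- z / 2) / 2 + real t powr (- z / 2) / 4 + b" .
    moreover have "real t powr (- z / 2) \<ge> 0" by simp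
    ultimately show ?thesis unfolding f_def K_def by linarith
  qed
qed





lemma util_cong:
  "(\<And>m. m \<in> {1..M} \<Longrightarrow> d m = d' m) \<Longrightarrow> util M d X = util M d' X"
  unfolding util_def by (metis (no_types, lifting) sum.cong)

lemma util_expand:
  assumes "\<And>m. m \<in> {1..M} \<Longrightarrow> d m \<subseteq> {1..N}"
  shows "util M d X = (1 / real M) * (\<Sum>m=1..M. \<Sum>n=1..N. of_bool (n \<in> d m) * X n m)"
  unfolding util_def
proof (rule arg_cong[where f="\<lambda>x. (1 / real M) * x"], rule sum.cong[OF refl])
  fix m assume m: "m \<in> {1..M}"
  have "{1..N} \<inter> d m = d m" using assms[OF m] by auto
  then have "(\<Sum>n\<in>d m. X n m) = (\<Sum>n\<in>{1..N} \<inter> d m. X n m)" by simp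
  also have "\<dots> = (\<Sum>n=1..N. if n \<in> d m then X n m else 0)"
    by (rule sum.inter_restrict) simp
  also have "\<dots> = (\<Sum>n=1..N. of_bool (n \<in> d m) * X n m)"
    by (intro sum.cong refl) simp
  finally show "(\<Sum>n\<in>d m. X n m) = (\<Sum>n=1..N. of_bool (n \<in> d m) * X n m)" .
qed

lemma util_nonneg:
  assumes "\<And>n m. m \<in> {1..M} \<Longrightarrow> n \<in> d m \<Longrightarrow> X n m \<ge> 0"
  shows "util M d X \<ge> 0"
  unfolding util_def using assms by (intro mult_nonneg_nonneg sum_nonneg) auto

lemma util_le_N:
  assumes "\<And>m. m \<in> {1..M} \<Longrightarrow> d m \<subseteq> {1..N}"
    and "\<And>n m. m \<in> {1..M} \<Longrightarrow> n \<in> d m \<Longrightarrow> X n m \<le> 1"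
  shows "util M d X \<le> real N"
proof (cases "M = 0")
  case True then show ?thesis by (simp add: util_def)
next
  case False
  have "(\<Sum>m=1..M. \<Sum>n\<in>d m. X n m) \<le> (\<Sum>m=1..M. real N)"
  proof (rule sum_mono)
    fix m assume m: "m \<in> {1..M}"
    have "(\<Sum>n\<in>d m. X n m) \<le> (\<Sum>n\<in>d m. 1)" using assms(2)[OF m] by (intro sum_mono) auto
    also have "\<dots> = real (card (d m))" by simp
    also have "card (d m) \<le> card {1..N}" using assms(1)[OF m] by (intro card_mono) auto
    then have "real (card (d m)) \<le> real N" by simp
    finally show "(\<Sum>n\<in>d m. X n m) \<le> real N" .
  qed
  also have "\<dots> = real M * real N" by simp
  finally show ?thesis unfolding util_def using False by (simp add: field_simps)
qed

lemma util_err: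
  assumes "\<And>m. m \<in> {1..M} \<Longrightarrow> d m \<subseteq> {1..N}"
    and "\<And>n m. m \<in> {1..M} \<Longrightarrow> n \<in> d m \<Longrightarrow> \<bar>X n m - Y n m\<bar> \<le> E n m"
    and "\<And>n m. m \<in> {1..M} \<Longrightarrow> n \<in> {1..N} \<Longrightarrow> E n m \<ge> 0"
  shows "\<bar>util M d X - util M d Y\<bar> \<le> (1 / real M) * (\<Sum>m=1..M. \<Sum>n=1..N. E n m)"
proof -
  have "util M d X - util M d Y = (1 / real M) * (\<Sum>m=1..M. \<Sum>n\<in>d m. X n m - Y n m)"
    unfolding util_def by (simp add: sum_subtractf right_diff_distrib)
  then have "\<bar>util M d X - util M d Y\<bar> = (1 / real M) * \<bar>\<Sum>m=1..M. \<Sum>n\<in>d m. X n m - Y n m\<bar>"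
    by (simp add: abs_mult)
  also have "\<bar>\<Sum>m=1..M. \<Sum>n\<in>d m. X n m - Y n m\<bar> \<le> (\<Sum>m=1..M. \<Sum>n=1..N. E n m)"
  proof -
    have "\<bar>\<Sum>m=1..M. \<Sum>n\<in>d m. X n m - Y n m\<bar> \<le> (\<Sum>m=1..M. \<bar>\<Sum>n\<in>d m. X n m - Y n m\<bar>)"
      by (rule sum_abs)
    also have "\<dots> \<le> (\<Sum>m=1..M. \<Sum>n=1..N. E n m)"
    proof (rule sum_mono)
      fix m assume m: "m \<in> {1..M}"
      have "\<bar>\<Sum>n\<in>d m. X n m - Y n m\<bar> \<le> (\<Sum>n\<in>d m. \<bar>X n m - Y n m\<bar>)" by (rule sum_abs)
      also have "\<dots> \<le> (\<Sum>n\<in>d m. E n m)" using assms(2)[OF m] by (intro sum_mono) auto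
      also have "\<dots> \<le> (\<Sum>n=1..N. E n m)"
        using assms(1)[OF m] assms(3)[OF m] by (intro sum_mono2) auto
      finally show "\<bar>\<Sum>n\<in>d m. X n m - Y n m\<bar> \<le> (\<Sum>n=1..N. E n m)" .
    qed
    finally show ?thesis .
  qed
  then have "(1 / real M) * \<bar>\<Sum>m=1..M. \<Sum>n\<in>d m. X n m - Y n m\<bar> \<le> (1 / real M) * (\<Sum>m=1..M. \<Sum>n=1..N. E n m)"
    by (intro mult_left_mono) auto
  finally show ?thesis .
qed


lemma regret_pw:
  fixes M N :: nat
  assumes rule: "cocs_rule M Nb cost B phi h K t C P s"
    and fo: "feasible M Nb cost B t so"
    and Nb: "\<forall>m t. Nb m t \<subseteq> {1..N}"
    and mu: "\<And>n m. n \<in> {1..N} \<Longrightarrow> m \<in> {1..M} \<Longrightarrow> 0 \<le> mu n m \<and> mu n m \<le> 1"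
    and M: "M \<ge> 1"
  shows "util M so mu - util M s mu \<le>
     real N * of_bool (\<exists>m\<in>{1..M}. s m \<inter> {n \<in> Nb m t. real (C n m (square h (phi n m t))) \<le> K (real t)} \<noteq> {})
     + 2 / real M * (\<Sum>m=1..M. \<Sum>n=1..N. \<bar>P n m (square h (phi n m t)) - mu n m\<bar> *
           of_bool (K (real t) < real (C n m (square h (phi n m t)))))"
proof -
  define UE where "UE = (\<lambda>m. {n \<in> Nb m t. real (C n m (square h (phi n m t))) \<le> K (real t)})"
  define Xh where "Xh = (\<lambda>n m. P n m (square h (phi n m t)))"
  define nUE where "nUE = (\<lambda>s'. \<Sum>m=1..M. card (s' m \<inter> UE m))"
  define E where "E = (\<lambda>n m. \<bar>P n m (square h (phi n m t)) - mu n m\<bar> *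
           of_bool (K (real t) < real (C n m (square h (phi n m t)))))"
  define e where "e = (\<Sum>m=1..M. \<Sum>n=1..N. E n m)"
  have R: "feasible M Nb cost B t s \<and>
         (if (\<exists>m\<in>{1..M}. UE m \<noteq> {}) then
            (\<forall>s'. feasible M Nb cost B t s' \<longrightarrow> nUE s' \<le> nUE s) \<and>
            (\<forall>s'. feasible M Nb cost B t s' \<and> (\<forall>m\<in>{1..M}. s' m \<inter> UE m = s m \<inter> UE m) \<longrightarrow>
                  util M (\<lambda>m. s' m - UE m) Xh \<le> util M (\<lambda>m. s m - UE m) Xh)
          else
            (\<forall>s'. feasible M Nb cost B t s' \<longrightarrow> util M s' Xh \<le> util M s Xh))"
    using rule unfolding cocs_rule_def Let_def UE_def Xh_def nUE_def .
  then have fs: "feasible M Nb cost B t s" by simp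
  have subs: "\<And>d m. feasible M Nb cost B t d \<Longrightarrow> m \<in> {1..M} \<Longrightarrow> d m \<subseteq> Nb m t"
    unfolding feasible_def by auto
  have subN: "\<And>d m. feasible M Nb cost B t d \<Longrightarrow> m \<in> {1..M} \<Longrightarrow> d m \<subseteq> {1..N}"
    using subs Nb by blast
  have E0: "\<And>n m. m \<in> {1..M} \<Longrightarrow> n \<in> {1..N} \<Longrightarrow> E n m \<ge> 0" unfolding E_def by simp
  have e0: "e \<ge> 0" unfolding e_def using E0 by (intro sum_nonneg) auto
  have mu0: "\<And>d n m. feasible M Nb cost B t d \<Longrightarrow> m \<in> {1..M} \<Longrightarrow> n \<in> d m \<Longrightarrow> 0 \<le> mu n m \<and> mu n m \<le> 1"
    using subN mu by blast
  show ?thesis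
  proof (cases "\<exists>m\<in>{1..M}. s m \<inter> UE m \<noteq> {}")
    case True
    have "util M so mu \<le> real N" using subN[OF fo] mu0[OF fo] by (intro util_le_N) auto
    moreover have "util M s mu \<ge> 0" using mu0[OF fs] by (intro util_nonneg) auto
    moreover have "0 \<le> 2 / real M * e" using e0 by simp
    ultimately show ?thesis using True unfolding UE_def e_def E_def by simp
  next
    case False
    then have sUE: "\<And>m. m \<in> {1..M} \<Longrightarrow> s m \<inter> UE m = {}" by auto
    have oUE: "(\<forall>m\<in>{1..M}. so m \<inter> UE m = {}) \<and> util M so Xh \<le> util M s Xh"
    proof (cases "\<exists>m\<in>{1..M}. UE m \<noteq> {}")
      case True
      then have R1: "nUE so \<le> nUE s" and
        R2: "\<And>s'. feasible M Nb cost B t s' \<Longrightarrow> (\<forall>m\<in>{1..M}. s' m \<inter> UE m = s m \<inter> UE m) \<Longrightarrow>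
                  util M (\<lambda>m. s' m - UE m) Xh \<le> util M (\<lambda>m. s m - UE m) Xh"
        using R fo by auto
      have "nUE s = 0" unfolding nUE_def using sUE by simp
      then have "nUE so = 0" using R1 by simp
      then have c0: "\<And>m. m \<in> {1..M} \<Longrightarrow> card (so m \<inter> UE m) = 0" unfolding nUE_def by simp
      have oU: "\<forall>m\<in>{1..M}. so m \<inter> UE m = {}"
      proof
        fix m assume m: "m \<in> {1..M}"
        have "finite (so m \<inter> UE m)" using subN[OF fo m] by (meson finite_Int finite_atLeastAtMost finite_subset)
        then show "so m \<inter> UE m = {}" using c0[OF m] by simp
      qed
      have "util M (\<lambda>m. so m - UE m) Xh \<le> util M (\<lambda>m. s m - UE m) Xh"
        using R2[OF fo] oU sUE by simp
      moreover have "util M (\<lambda>m. so m - UE m) Xh = util M so Xh"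
        using oU by (intro util_cong) auto
      moreover have "util M (\<lambda>m. s m - UE m) Xh = util M s Xh"
        using sUE by (intro util_cong) auto
      ultimately show ?thesis using oU by simp
    next
      case False
      then show ?thesis using R fo by auto
    qed
    have err: "\<And>d. feasible M Nb cost B t d \<Longrightarrow> (\<And>m. m \<in> {1..M} \<Longrightarrow> d m \<inter> UE m = {}) \<Longrightarrow>
        \<bar>util M d Xh - util M d mu\<bar> \<le> (1 / real M) * e"
    proof -
      fix d assume fd: "feasible M Nb cost B t d" and dU: "\<And>m. m \<in> {1..M} \<Longrightarrow> d m \<inter> UE m = {}"
      show "\<bar>util M d Xh - util M d mu\<bar> \<le> (1 / real M) * e"
        unfolding e_def
      proof (rule util_err[OF subN[OF fd]])
        fix n m assume m: "m \<in> {1..M}" and n: "n \<in> d m"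
        have "n \<in> Nb m t" using subs[OF fd m] n by auto
        moreover have "n \<notin> UE m" using dU[OF m] n by auto
        ultimately have "K (real t) < real (C n m (square h (phi n m t)))" unfolding UE_def by auto
        then show "\<bar>Xh n m - mu n m\<bar> \<le> E n m" unfolding E_def Xh_def by simp
      qed (use E0 in auto)
    qed
    have "util M so mu \<le> util M so Xh + (1 / real M) * e" using err[OF fo] oUE by auto
    also have "\<dots> \<le> util M s Xh + (1 / real M) * e" using oUE by simp
    also have "\<dots> \<le> util M s mu + 2 * ((1 / real M) * e)" using err[OF fs sUE] by auto
    finally have "util M so mu - util M s mu \<le> 2 / real M * e" by simp
    then show ?thesis using False unfolding UE_def e_def E_def by simp
  qed
qed




lemma counter_strict:
  assumes t1: "1 \<le> t1" "t1 < t2" and n: "n \<in> policy_dec sel phi h \<omega> t1 m"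
    and l: "square h (phi n m t1) = l"
  shows "counter phi h (history sel phi h \<omega> (t1 - 1)) n m l < counter phi h (history sel phi h \<omega> (t2 - 1)) n m l"
proof -
  let ?O1 = "obs_rounds phi h (history sel phi h \<omega> (t1 - 1)) n m l"
  let ?O2 = "obs_rounds phi h (history sel phi h \<omega> (t2 - 1)) n m l"
  have "?O1 \<subseteq> ?O2" unfolding obs_rounds_history using t1 by auto
  moreover have "t1 - 1 \<in> ?O2" unfolding obs_rounds_history using t1 n l by auto
  moreover have "t1 - 1 \<notin> ?O1" unfolding obs_rounds_history by auto
  ultimately have "?O1 \<subset> ?O2" by blast
  then show ?thesis unfolding counter_def by (intro psubset_card_mono obs_finite)
qed

lemma cell_lt: "h \<ge> 1 \<Longrightarrow> cell h x < h"
  unfolding cell_def by linarith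

lemma expl_count:
  fixes K :: "real \<Rightarrow> real" and N M T hT :: nat
  assumes Nb: "\<forall>m t. Nb m t \<subseteq> {1..N}" and h: "hT \<ge> 1"
    and Kmono: "\<And>t. t \<in> {1..T} \<Longrightarrow> K (real t) \<le> K (real T)"
  shows "card {t\<in>{1..T}. \<exists>m\<in>{1..M}. policy_dec sel phi hT \<omega> t m \<inter>
      {n \<in> Nb m t. real (counter phi hT (history sel phi hT \<omega> (t - 1)) n m (square hT (phi n m t))) \<le> K (real t)} \<noteq> {}}
    \<le> N * M * (hT * hT) * (nat \<lfloor>K (real T)\<rfloor> + 1)"
proof -
  define D where "D = {t\<in>{1..T}. \<exists>m\<in>{1..M}. policy_dec sel phi hT \<omega> t m \<inter>
      {n \<in> Nb m t. real (counter phi hT (history sel phi hT \<omega> (t - 1)) n m (square hT (phi n m t))) \<le> K (real t)} \<noteq> {}}"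
  define Q where "Q = (\<lambda>t nm. snd nm \<in> {1..M} \<and> fst nm \<in> policy_dec sel phi hT \<omega> t (snd nm) \<and> fst nm \<in> Nb (snd nm) t \<and>
      real (counter phi hT (history sel phi hT \<omega> (t - 1)) (fst nm) (snd nm) (square hT (phi (fst nm) (snd nm) t))) \<le> K (real t))"
  have "\<forall>t\<in>D. \<exists>nm. Q t nm" unfolding D_def Q_def by fastforce
  then obtain f where f: "\<And>t. t \<in> D \<Longrightarrow> Q t (f t)" by metis
  define G where "G = (\<lambda>t. (fst (f t), snd (f t), square hT (phi (fst (f t)) (snd (f t)) t),
      counter phi hT (history sel phi hT \<omega> (t - 1)) (fst (f t)) (snd (f t)) (square hT (phi (fst (f t)) (snd (f t)) t))))"
  define Tg where "Tg = {1..N} \<times> {1..M} \<times> ({..<hT} \<times> {..<hT}) \<times> {..nat \<lfloor>K (real T)\<rfloor>}"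
  have GT: "G ` D \<subseteq> Tg"
  proof
    fix x assume "x \<in> G ` D"
    then obtain t where t: "t \<in> D" and x: "x = G t" by auto
    have Q: "Q t (f t)" by (rule f[OF t])
    have tT: "t \<in> {1..T}" using t by (simp add: D_def)
    let ?c = "counter phi hT (history sel phi hT \<omega> (t - 1)) (fst (f t)) (snd (f t)) (square hT (phi (fst (f t)) (snd (f t)) t))"
    have "real ?c \<le> K (real T)" using Q Kmono[OF tT] unfolding Q_def by linarith
    then have "?c \<le> nat \<lfloor>K (real T)\<rfloor>" by linarith
    moreover have "fst (f t) \<in> {1..N}" using Q Nb unfolding Q_def by blast
    ultimately show "x \<in> Tg" using Q x h unfolding G_def Tg_def Q_def square_def
      by (auto simp: cell_lt)
  qed
  have inj: "inj_on G D"
  proof (rule inj_onI)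
    have key: "\<And>t1 t2. t1 \<in> D \<Longrightarrow> t2 \<in> D \<Longrightarrow> t1 < t2 \<Longrightarrow> G t1 \<noteq> G t2"
    proof
      fix t1 t2 assume t1: "t1 \<in> D" and t2: "t2 \<in> D" and lt: "t1 < t2" and eq: "G t1 = G t2"
      have Q: "Q t1 (f t1)" by (rule f[OF t1])
      have e: "fst (f t1) = fst (f t2)" "snd (f t1) = snd (f t2)"
        "square hT (phi (fst (f t1)) (snd (f t1)) t1) = square hT (phi (fst (f t2)) (snd (f t2)) t2)"
        "counter phi hT (history sel phi hT \<omega> (t1 - 1)) (fst (f t1)) (snd (f t1)) (square hT (phi (fst (f t1)) (snd (f t1)) t1))
         = counter phi hT (history sel phi hT \<omega> (t2 - 1)) (fst (f t2)) (snd (f t2)) (square hT (phi (fst (f t2)) (snd (f t2)) t2))"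
        using eq unfolding G_def by auto
      have "1 \<le> t1" using t1 by (simp add: D_def)
      then have "counter phi hT (history sel phi hT \<omega> (t1 - 1)) (fst (f t1)) (snd (f t1)) (square hT (phi (fst (f t1)) (snd (f t1)) t1))
         < counter phi hT (history sel phi hT \<omega> (t2 - 1)) (fst (f t1)) (snd (f t1)) (square hT (phi (fst (f t1)) (snd (f t1)) t1))"
        using lt Q unfolding Q_def by (intro counter_strict) auto
      then show False using e by simp
    qed
    fix t1 t2 assume "t1 \<in> D" "t2 \<in> D" "G t1 = G t2"
    then show "t1 = t2" using key by (metis linorder_neqE_nat)
  qed
  have "card D = card (G ` D)" using inj by (simp add: card_image)
  also have "\<dots> \<le> card Tg" using GT by (intro card_mono) (auto simp: Tg_def)
  also have "card Tg = N * M * (hT * hT) * (nat \<lfloor>K (real T)\<rfloor> + 1)"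
    unfolding Tg_def by (simp add: card_cartesian_product algebra_simps)
  finally show ?thesis unfolding D_def .
qed




lemma E_double_sum:
  fixes F :: "'a \<Rightarrow> bool pmf" and g :: "('a \<Rightarrow> bool) \<Rightarrow> 'b \<Rightarrow> 'c \<Rightarrow> real"
  assumes fin: "finite I"
  shows "measure_pmf.expectation (Pi_pmf I False F) (\<lambda>\<omega>. c * (\<Sum>m\<in>A. \<Sum>n\<in>B. g \<omega> m n)) =
    c * (\<Sum>m\<in>A. \<Sum>n\<in>B. measure_pmf.expectation (Pi_pmf I False F) (\<lambda>\<omega>. g \<omega> m n))"
  by (simp add: fin Bochner_Integration.integral_sum)

lemma E_util_X:
  fixes F :: "nat \<times> nat \<times> nat \<Rightarrow> bool pmf" and S :: "(nat \<times> nat \<times> nat \<Rightarrow> bool) \<Rightarrow> nat \<Rightarrow> nat set"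
  assumes fin: "finite I"
    and jI: "\<And>n m. n \<in> {1..N} \<Longrightarrow> m \<in> {1..M} \<Longrightarrow> (t, n, m) \<in> I"
    and Fj: "\<And>n m. n \<in> {1..N} \<Longrightarrow> m \<in> {1..M} \<Longrightarrow> F (t, n, m) = bernoulli_pmf (mu n m)"
    and mu: "\<And>n m. n \<in> {1..N} \<Longrightarrow> m \<in> {1..M} \<Longrightarrow> 0 \<le> mu n m \<and> mu n m \<le> 1"
    and Sind: "\<And>\<omega> n m y. S (fun_upd \<omega> (t, n, m) y) = S \<omega>"
    and Ssub: "\<And>\<omega> m. m \<in> {1..M} \<Longrightarrow> S \<omega> m \<subseteq> {1..N}"
  shows "measure_pmf.expectation (Pi_pmf I False F) (\<lambda>\<omega>. util M (S \<omega>) (Xvec \<omega> t)) =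
         measure_pmf.expectation (Pi_pmf I False F) (\<lambda>\<omega>. util M (S \<omega>) mu)"
proof -
  let ?E = "measure_pmf.expectation (Pi_pmf I False F)"
  have "?E (\<lambda>\<omega>. util M (S \<omega>) (Xvec \<omega> t)) =
     ?E (\<lambda>\<omega>. (1 / real M) * (\<Sum>m=1..M. \<Sum>n=1..N. of_bool (n \<in> S \<omega> m) * of_bool (\<omega> (t, n, m))))"
    unfolding Xvec_def by (intro Bochner_Integration.integral_cong refl util_expand Ssub)
  also have "\<dots> = (1 / real M) * (\<Sum>m=1..M. \<Sum>n=1..N. ?E (\<lambda>\<omega>. of_bool (n \<in> S \<omega> m) * of_bool (\<omega> (t, n, m))))"
    by (rule E_double_sum[OF fin])
  also have "\<dots> = (1 / real M) * (\<Sum>m=1..M. \<Sum>n=1..N. ?E (\<lambda>\<omega>. of_bool (n \<in> S \<omega> m) * mu n m))"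
  proof (intro arg_cong[where f="\<lambda>x. (1 / real M) * x"] sum.cong refl)
    fix m n assume m: "m \<in> {1..M}" and n: "n \<in> {1..N}"
    have "?E (\<lambda>\<omega>. of_bool (n \<in> S \<omega> m) * of_bool (\<omega> (t, n, m))) = ?E (\<lambda>\<omega>. of_bool (n \<in> S \<omega> m)) * mu n m"
    proof -
      have ind: "\<And>g y. (of_bool (n \<in> S (fun_upd g (t, n, m) y) m) :: real) = of_bool (n \<in> S g m)"
        using Sind by simp
      show ?thesis
        by (rule E_bern) (use fin jI[OF n m] Fj[OF n m] mu[OF n m] Sind in auto)
    qed
    also have "\<dots> = ?E (\<lambda>\<omega>. of_bool (n \<in> S \<omega> m) * mu n m)" by simp
    finally show "?E (\<lambda>\<omega>. of_bool (n \<in> S \<omega> m) * of_bool (\<omega> (t, n, m))) = ?E (\<lambda>\<omega>. of_bool (n \<in> S \<omega> m) * mu n m)" .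
  qed
  also have "\<dots> = ?E (\<lambda>\<omega>. (1 / real M) * (\<Sum>m=1..M. \<Sum>n=1..N. of_bool (n \<in> S \<omega> m) * mu n m))"
    by (rule E_double_sum[OF fin, symmetric])
  also have "\<dots> = ?E (\<lambda>\<omega>. util M (S \<omega>) mu)"
    by (intro Bochner_Integration.integral_cong refl util_expand[symmetric] Ssub)
  finally show ?thesis .
qed




lemma cell_bounds:
  assumes h: "h \<ge> 1" and x: "0 \<le> x" "x \<le> 1"
  shows "real (cell h x) \<le> x * real h \<and> x * real h \<le> real (cell h x) + 1"
proof (cases "nat \<lfloor>x * real h\<rfloor> \<le> h - 1")
  case True
  then have c: "cell h x = nat \<lfloor>x * real h\<rfloor>" unfolding cell_def by simp
  have "0 \<le> x * real h" using x by simp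
  then show ?thesis unfolding c by linarith
next
  case False
  then have c: "cell h x = h - 1" unfolding cell_def by simp
  have "x * real h \<le> real h" using x h by (simp add: mult_le_cancel_right1)
  moreover have "real h - 1 \<le> x * real h" using False h by linarith
  ultimately show ?thesis unfolding c using h by (simp add: of_nat_diff)
qed

lemma square_dist:
  assumes h: "h \<ge> 1" and x: "x \<in> Phi" and x': "x' \<in> Phi" and sq: "square h x = square h x'"
  shows "norm (x - x') \<le> sqrt 2 / real h"
proof -
  have hp: "real h > 0" using h by simp
  have c1: "\<bar>fst x - fst x'\<bar> \<le> 1 / real h"
  proof -
    have "cell h (fst x) = cell h (fst x')" using sq unfolding square_def by simp
    moreover have "real (cell h (fst x)) \<le> fst x * real h \<and> fst x * real h \<le> real (cell h (fst x)) + 1"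
      using x h by (intro cell_bounds) (auto simp: Phi_def mem_Times_iff)
    moreover have "real (cell h (fst x')) \<le> fst x' * real h \<and> fst x' * real h \<le> real (cell h (fst x')) + 1"
      using x' h by (intro cell_bounds) (auto simp: Phi_def mem_Times_iff)
    ultimately have "\<bar>fst x * real h - fst x' * real h\<bar> \<le> 1" by linarith
    then have "\<bar>fst x - fst x'\<bar> * real h \<le> 1" by (simp add: left_diff_distrib[symmetric] abs_mult)
    then show ?thesis using hp by (simp add: le_divide_eq)
  qed
  have c2: "\<bar>snd x - snd x'\<bar> \<le> 1 / real h"
  proof -
    have "cell h (snd x) = cell h (snd x')" using sq unfolding square_def by simp
    moreover have "real (cell h (snd x)) \<le> snd x * real h \<and> snd x * real h \<le> real (cell h (snd x)) + 1"
      using x h by (intro cell_bounds) (auto simp: Phi_def mem_Times_iff)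
    moreover have "real (cell h (snd x')) \<le> snd x' * real h \<and> snd x' * real h \<le> real (cell h (snd x')) + 1"
      using x' h by (intro cell_bounds) (auto simp: Phi_def mem_Times_iff)
    ultimately have "\<bar>snd x * real h - snd x' * real h\<bar> \<le> 1" by linarith
    then have "\<bar>snd x - snd x'\<bar> * real h \<le> 1" by (simp add: left_diff_distrib[symmetric] abs_mult)
    then show ?thesis using hp by (simp add: le_divide_eq)
  qed
  have "(fst x - fst x')\<^sup>2 \<le> (1 / real h)\<^sup>2"
    using power_mono[OF c1 abs_ge_zero, of 2] by simp
  moreover have "(snd x - snd x')\<^sup>2 \<le> (1 / real h)\<^sup>2"
    using power_mono[OF c2 abs_ge_zero, of 2] by simp
  ultimately have "(fst x - fst x')\<^sup>2 + (snd x - snd x')\<^sup>2 \<le> 2 * (1 / real h)\<^sup>2" by simp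
  then have "sqrt ((fst x - fst x')\<^sup>2 + (snd x - snd x')\<^sup>2) \<le> sqrt (2 * (1 / real h)\<^sup>2)"
    by (rule real_sqrt_le_mono)
  also have "sqrt (2 * (1 / real h)\<^sup>2) = sqrt 2 / real h"
    using hp by (simp add: real_sqrt_mult)
  finally show ?thesis
    by (cases x, cases x') (simp add: norm_Pair)
qed

lemma bias_bound:
  fixes L \<alpha> :: real
  assumes h: "h \<ge> 1" and x: "x \<in> Phi" and x': "x' \<in> Phi" and sq: "square h x = square h x'"
    and L: "L > 0" and a: "\<alpha> > 0"
    and hold: "\<bar>q x - q x'\<bar> \<le> L * norm (x - x') powr \<alpha>"
  shows "\<bar>q x - q x'\<bar> \<le> L * 2 powr (\<alpha> / 2) * real h powr (- \<alpha>)"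
proof -
  have hp: "real h > 0" using h by simp
  have "norm (x - x') powr \<alpha> \<le> (sqrt 2 / real h) powr \<alpha>"
    using square_dist[OF h x x' sq] a by (intro powr_mono2) auto
  also have "(sqrt 2 / real h) powr \<alpha> = sqrt 2 powr \<alpha> / real h powr \<alpha>"
    using hp by (simp add: powr_divide)
  also have "sqrt 2 powr \<alpha> = 2 powr (\<alpha> / 2)"
    by (simp add: powr_half_sqrt[symmetric] powr_powr)
  also have "2 powr (\<alpha> / 2) / real h powr \<alpha> = 2 powr (\<alpha> / 2) * real h powr (- \<alpha>)"
    using hp by (simp add: powr_minus_divide)
  finally have "norm (x - x') powr \<alpha> \<le> 2 powr (\<alpha> / 2) * real h powr (- \<alpha>)" .
  then have "L * norm (x - x') powr \<alpha> \<le> L * (2 powr (\<alpha> / 2) * real h powr (- \<alpha>))"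
    using L by (intro mult_left_mono) auto
  then show ?thesis using hold by simp
qed

lemma cocs_feasible: "cocs_rule M Nb cost B phi h K t C P s \<Longrightarrow> feasible M Nb cost B t s"
  unfolding cocs_rule_def Let_def by (elim conjE)

lemma E_lin:
  fixes F :: "'a \<Rightarrow> bool pmf" and g :: "('a \<Rightarrow> bool) \<Rightarrow> 'b \<Rightarrow> 'c \<Rightarrow> real"
  assumes fin: "finite I"
  shows "measure_pmf.expectation (Pi_pmf I False F) (\<lambda>\<omega>. a * f \<omega> + c * (\<Sum>m\<in>A. \<Sum>n\<in>B. g \<omega> m n)) =
    a * measure_pmf.expectation (Pi_pmf I False F) f +
    c * (\<Sum>m\<in>A. \<Sum>n\<in>B. measure_pmf.expectation (Pi_pmf I False F) (\<lambda>\<omega>. g \<omega> m n))"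
  by (simp add: fin Bochner_Integration.integral_sum)




theorem theorem1:
  fixes N M T :: nat
    and Nb :: "nat \<Rightarrow> nat \<Rightarrow> nat set"
    and y :: "nat \<Rightarrow> nat \<Rightarrow> real" and cf :: "nat \<Rightarrow> real \<Rightarrow> real"
    and B :: real
    and phi :: "nat \<Rightarrow> nat \<Rightarrow> nat \<Rightarrow> real \<times> real"
    and p :: "nat \<Rightarrow> nat \<Rightarrow> real \<times> real \<Rightarrow> real"
    and L \<alpha> z \<gamma> A \<theta> :: real
    and H :: "nat \<Rightarrow> real"
    and sopt :: "nat \<Rightarrow> decision"
    and sel :: "nat \<Rightarrow> (nat \<Rightarrow> nat \<Rightarrow> nat \<times> nat \<Rightarrow> nat) \<Rightarrow> (nat \<Rightarrow> nat \<Rightarrow> nat \<times> nat \<Rightarrow> real) \<Rightarrow> decision"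
  defines "cost \<equiv> (\<lambda>n t. cf n (y n t))"
    and "cmin \<equiv> Min {cf n (y n t) | n t. n \<in> {1..N} \<and> t \<in> {1..T}}"
    and "hT \<equiv> nat \<lceil>real T powr \<gamma>\<rceil>"
    and "K \<equiv> (\<lambda>t::real. t powr z * ln t)"
  assumes N: "N \<ge> 1" and M: "M \<ge> 1" and T: "T \<ge> 1"
    and B: "B > 0"
    and Nb: "\<forall>m t. Nb m t \<subseteq> {1..N}"
    and cf_mono: "\<forall>n. mono (cf n)"
    and cost_pos: "\<forall>n t. cf n (y n t) > 0"
    and phi: "\<forall>n m t. phi n m t \<in> Phi"
    and p_range: "\<forall>n m \<phi>. \<phi> \<in> Phi \<longrightarrow> p n m \<phi> \<in> {0..1}"
    and L: "L > 0" and \<alpha>: "\<alpha> > 0"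
    and holder: "\<forall>n\<in>{1..N}. \<forall>m\<in>{1..M}. \<forall>\<phi>\<in>Phi. \<forall>\<phi>'\<in>Phi.
                   \<bar>p n m \<phi> - p n m \<phi>'\<bar> \<le> L * norm (\<phi> - \<phi>') powr \<alpha>"
    and z: "0 < z" "z < 1"
    and \<gamma>: "0 < \<gamma>" "\<gamma> < 1/2"
    and H: "\<forall>t\<in>{1..T}. H t > real N * real M * B / cmin * real t powr (- z / 2)"
    and A: "A > 0" and \<theta>: "\<theta> < 0" "-1 < \<theta>"
    and HA: "\<forall>t\<in>{1..T}. 2 * H t + 2 * real N * real M * B / cmin * L * 2 powr (\<alpha> / 2) * real hT powr (- \<alpha>)
                          \<le> A * real t powr \<theta>"
    and sopt: "\<forall>t\<in>{1..T}. feasible M Nb cost B t (sopt t) \<and>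
                 (\<forall>s. feasible M Nb cost B t s \<longrightarrow>
                      util M s (\<lambda>n m. p n m (phi n m t)) \<le> util M (sopt t) (\<lambda>n m. p n m (phi n m t)))"
    and policy: "\<forall>t\<in>{1..T}. \<forall>C P. cocs_rule M Nb cost B phi hT K t C P (sel t C P)"
  shows "(\<Sum>t=1..T.
            measure_pmf.expectation (outcome_pmf N M T p phi) (\<lambda>\<omega>. util M (sopt t) (Xvec \<omega> t))
          - measure_pmf.expectation (outcome_pmf N M T p phi)
              (\<lambda>\<omega>. util M (policy_dec sel phi hT \<omega> t) (Xvec \<omega> t)))
    \<le> 4 * real N ^ 2 * real M * B / cmin * (real T powr (z + 2 * \<gamma>) * ln (real T) + real T powr (2 * \<gamma>))
      + real N * real M * B / cmin * (\<Sum>k=1..nat \<lfloor>B / cmin\<rfloor>. real (N choose k)) * pi ^ 2 / 3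
      + 3 * real N * real M * B / cmin * L * 2 powr (\<alpha> / 2) * real T powr (1 - \<gamma> * \<alpha>)
      + A / (1 + \<theta>) * real T powr (1 + \<theta>)"
proof -
  define I where "I = {1..T} \<times> {1..N} \<times> {1..M}"
  define F where "F = (\<lambda>(t, n, m). bernoulli_pmf (p n m (phi n m t)))"
  define mu where "mu = (\<lambda>t n m. p n m (phi n m t))"
  have Om: "outcome_pmf N M T p phi = Pi_pmf I False F"
    unfolding outcome_pmf_def I_def F_def ..
  have fin: "finite I" unfolding I_def by simp
  have jI: "\<And>t n m. t \<in> {1..T} \<Longrightarrow> n \<in> {1..N} \<Longrightarrow> m \<in> {1..M} \<Longrightarrow> (t, n, m) \<in> I"
    unfolding I_def by simp
  have Fi: "\<And>t n m. F (t, n, m) = bernoulli_pmf (mu t n m)"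
    unfolding F_def mu_def by simp
  have mu01: "\<And>t n m. 0 \<le> mu t n m \<and> mu t n m \<le> 1"
  proof -
    fix t n m
    have "p n m (phi n m t) \<in> {0..1}" using p_range phi by blast
    then show "0 \<le> mu t n m \<and> mu t n m \<le> 1" unfolding mu_def by simp
  qed
  let ?E = "measure_pmf.expectation (Pi_pmf I False F)"
  define CS where "CS = {cf n (y n t) | n t. n \<in> {1..N} \<and> t \<in> {1..T}}"
  have CS_eq: "CS = (\<lambda>(n, t). cf n (y n t)) ` ({1..N} \<times> {1..T})"
    unfolding CS_def by fastforce
  have CS_fin: "finite CS" unfolding CS_eq by simp
  have CS_ne: "CS \<noteq> {}" unfolding CS_eq using N T by auto
  have cmin_CS: "cmin = Min CS" unfolding cmin_def CS_def ..
  have cpos: "cmin > 0"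
  proof -
    have "cmin \<in> CS" unfolding cmin_CS using CS_fin CS_ne by (rule Min_in)
    then show ?thesis unfolding CS_def using cost_pos by auto
  qed
  have cle: "\<And>n t. n \<in> {1..N} \<Longrightarrow> t \<in> {1..T} \<Longrightarrow> cmin \<le> cost n t"
  proof -
    fix n t assume "n \<in> {1..N}" "t \<in> {1..T}"
    then have "cost n t \<in> CS" unfolding CS_def cost_def by auto
    then show "cmin \<le> cost n t" unfolding cmin_CS using CS_fin by simp
  qed
  define s where "s = (\<lambda>t \<omega>. policy_dec sel phi hT \<omega> t)"
  have rule_t: "\<And>t \<omega>. t \<in> {1..T} \<Longrightarrow> cocs_rule M Nb cost B phi hT K t
      (counter phi hT (history sel phi hT \<omega> (t - 1))) (estimate phi hT \<omega> (history sel phi hT \<omega> (t - 1))) (s t \<omega>)"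
    unfolding s_def policy_dec_def using policy by blast
  have feas: "\<And>t \<omega>. t \<in> {1..T} \<Longrightarrow> feasible M Nb cost B t (s t \<omega>)"
    using rule_t cocs_feasible by blast
  have subN: "\<And>t d m. feasible M Nb cost B t d \<Longrightarrow> m \<in> {1..M} \<Longrightarrow> d m \<subseteq> {1..N}"
    using Nb unfolding feasible_def by blast
  have LHS: "(\<Sum>t=1..T.
            measure_pmf.expectation (outcome_pmf N M T p phi) (\<lambda>\<omega>. util M (sopt t) (Xvec \<omega> t))
          - measure_pmf.expectation (outcome_pmf N M T p phi)
              (\<lambda>\<omega>. util M (policy_dec sel phi hT \<omega> t) (Xvec \<omega> t)))
     = (\<Sum>t=1..T. ?E (\<lambda>\<omega>. util M (sopt t) (mu t) - util M (s t \<omega>) (mu t)))"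
  proof (rule sum.cong[OF refl])
    fix t assume t: "t \<in> {1..T}"
    have fo: "feasible M Nb cost B t (sopt t)" using sopt t by blast
    have e1: "?E (\<lambda>\<omega>. util M (sopt t) (Xvec \<omega> t)) = ?E (\<lambda>\<omega>. util M (sopt t) (mu t))"
      by (rule E_util_X[where N=N]) (use fin jI[OF t] Fi mu01 subN[OF fo] in auto)
    have e2: "?E (\<lambda>\<omega>. util M (s t \<omega>) (Xvec \<omega> t)) = ?E (\<lambda>\<omega>. util M (s t \<omega>) (mu t))"
      by (rule E_util_X[where N=N]) (use fin jI[OF t] Fi mu01 subN[OF feas[OF t]] in \<open>auto simp: s_def policy_upd\<close>)
    show "measure_pmf.expectation (outcome_pmf N M T p phi) (\<lambda>\<omega>. util M (sopt t) (Xvec \<omega> t))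
          - measure_pmf.expectation (outcome_pmf N M T p phi)
              (\<lambda>\<omega>. util M (policy_dec sel phi hT \<omega> t) (Xvec \<omega> t))
        = ?E (\<lambda>\<omega>. util M (sopt t) (mu t) - util M (s t \<omega>) (mu t))"
      unfolding Om using e1 e2 fin unfolding s_def by (simp add: Bochner_Integration.integral_diff)
  qed
  have lnT: "ln (real T) \<ge> 0" using T by simp
  have r0: "B / cmin > 0" using B cpos by simp
  have t1: "0 \<le> 4 * real N ^ 2 * real M * B / cmin * (real T powr (z + 2 * \<gamma>) * ln (real T) + real T powr (2 * \<gamma>))"
    using r0 lnT B cpos by (intro mult_nonneg_nonneg add_nonneg_nonneg) auto
  have t2: "0 \<le> real N * real M * B / cmin * (\<Sum>k=1..nat \<lfloor>B / cmin\<rfloor>. real (N choose k)) * pi ^ 2 / 3"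
    using B cpos by (intro mult_nonneg_nonneg divide_nonneg_nonneg sum_nonneg) auto
  have t3: "0 \<le> 3 * real N * real M * B / cmin * L * 2 powr (\<alpha> / 2) * real T powr (1 - \<gamma> * \<alpha>)"
    using B cpos L by (intro mult_nonneg_nonneg divide_nonneg_nonneg) auto
  have t4: "0 \<le> A / (1 + \<theta>) * real T powr (1 + \<theta>)"
    using A \<theta> by (intro mult_nonneg_nonneg divide_nonneg_nonneg) auto
  show ?thesis
  proof (cases "B < cmin")
    case True
    have empty: "\<And>t d m. t \<in> {1..T} \<Longrightarrow> feasible M Nb cost B t d \<Longrightarrow> m \<in> {1..M} \<Longrightarrow> d m = {}"
    proof (rule ccontr)
      fix t d m assume t: "t \<in> {1..T}" and fd: "feasible M Nb cost B t d" and m: "m \<in> {1..M}" and ne: "d m \<noteq> {}"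
      then obtain n where n: "n \<in> d m" by auto
      have dN: "d m \<subseteq> {1..N}" by (rule subN[OF fd m])
      then have fdm: "finite (d m)" by (rule finite_subset) simp
      have "cost n t \<le> (\<Sum>n'\<in>d m. cost n' t)"
        using fdm n cost_pos unfolding cost_def by (intro member_le_sum) (auto intro: less_imp_le)
      also have "\<dots> \<le> B" using fd m unfolding feasible_def by auto
      finally have "cost n t \<le> B" .
      moreover have "cmin \<le> cost n t" using cle[OF _ t] dN n by auto
      ultimately show False using True by simp
    qed
    have uz: "\<And>t d X. t \<in> {1..T} \<Longrightarrow> feasible M Nb cost B t d \<Longrightarrow> util M d X = 0"
  proof -
    fix t d and X :: "nat \<Rightarrow> nat \<Rightarrow> real" assume t: "t \<in> {1..T}" and fd: "feasible M Nb cost B t d"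
    have "(\<Sum>m=1..M. \<Sum>n\<in>d m. X n m) = (\<Sum>m=1..M. 0)"
      by (rule sum.cong[OF refl]) (simp add: empty[OF t fd])
    then show "util M d X = 0" unfolding util_def by simp
  qed
    have "(\<Sum>t=1..T. ?E (\<lambda>\<omega>. util M (sopt t) (mu t) - util M (s t \<omega>) (mu t))) = 0"
    proof (rule sum.neutral, rule ballI)
      fix t assume t: "t \<in> {1..T}"
      have fo: "feasible M Nb cost B t (sopt t)" using sopt t by blast
      have "(\<lambda>\<omega>. util M (sopt t) (mu t) - util M (s t \<omega>) (mu t)) = (\<lambda>\<omega>. 0)"
        using uz[OF t fo] uz[OF t feas[OF t]] by simp
      then show "?E (\<lambda>\<omega>. util M (sopt t) (mu t) - util M (s t \<omega>) (mu t)) = 0" by simp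
    qed
    then show ?thesis unfolding LHS using t1 t2 t3 t4 by linarith
  next
    case False
    then have r1: "B / cmin \<ge> 1" using cpos by simp
    define r where "r = B / cmin"
    have r1': "r \<ge> 1" using r1 by (simp add: r_def)
    have Tg1: "real T powr \<gamma> \<ge> 1" using T \<gamma> by (simp add: ge_one_powr_ge_zero)
    have hT1: "hT \<ge> 1" unfolding hT_def using Tg1 by linarith
    have hTle: "real hT \<le> 2 * real T powr \<gamma>"
    proof -
      have "real hT = real_of_int \<lceil>real T powr \<gamma>\<rceil>" unfolding hT_def using Tg1 by simp
      also have "\<dots> \<le> real T powr \<gamma> + 1" by linarith
      finally show ?thesis using Tg1 by linarith
    qed
    define bT where "bT = L * 2 powr (\<alpha> / 2) * real hT powr (- \<alpha>)"
    have bT0: "bT \<ge> 0" unfolding bT_def using L by simp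
    define UEx where "UEx = (\<lambda>t \<omega>. \<exists>m\<in>{1..M}. s t \<omega> m \<inter> {n \<in> Nb m t. real (counter phi hT (history sel phi hT \<omega> (t - 1)) n m (square hT (phi n m t))) \<le> K (real t)} \<noteq> {})"
    define err where "err = (\<lambda>t \<omega> m n. \<bar>estimate phi hT \<omega> (history sel phi hT \<omega> (t - 1)) n m (square hT (phi n m t)) - mu t n m\<bar> *
       of_bool (K (real t) < real (counter phi hT (history sel phi hT \<omega> (t - 1)) n m (square hT (phi n m t)))))"
    have pw: "\<And>t \<omega>. t \<in> {1..T} \<Longrightarrow> util M (sopt t) (mu t) - util M (s t \<omega>) (mu t) \<le>
        real N * of_bool (UEx t \<omega>) + 2 / real M * (\<Sum>m=1..M. \<Sum>n=1..N. err t \<omega> m n)"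
    proof -
      fix t \<omega> assume t: "t \<in> {1..T}"
      have fo: "feasible M Nb cost B t (sopt t)" using sopt t by blast
      show "?thesis t \<omega>" unfolding UEx_def err_def
        by (rule regret_pw[OF rule_t[OF t] fo Nb]) (use mu01 M in auto)
    qed
    have Eerr: "\<And>t m n. t \<in> {1..T} \<Longrightarrow> m \<in> {1..M} \<Longrightarrow> n \<in> {1..N} \<Longrightarrow>
        ?E (\<lambda>\<omega>. err t \<omega> m n) \<le> real t powr (- z / 2) + bT"
    proof -
      fix t m n assume t: "t \<in> {1..T}" and m: "m \<in> {1..M}" and n: "n \<in> {1..N}"
      have bias: "\<And>i. i \<in> {1..T} \<Longrightarrow> square hT (phi n m i) = square hT (phi n m t) \<Longrightarrow>
          \<bar>mu i n m - mu t n m\<bar> \<le> bT"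
        unfolding mu_def bT_def
        by (rule bias_bound[OF hT1 _ _ _ L \<alpha>]) (use phi holder n m in auto)
      have "?E (\<lambda>\<omega>. \<bar>estimate phi hT \<omega> (history sel phi hT \<omega> (t - 1)) n m (square hT (phi n m t)) - mu t n m\<bar> *
          of_bool (real (counter phi hT (history sel phi hT \<omega> (t - 1)) n m (square hT (phi n m t))) > real t powr z * ln (real t)))
         \<le> real t powr (- z / 2) + bT"
        by (rule err_bound[where mu="\<lambda>i. mu i n m", OF fin _ _ _ t bias bT0 z(1)])
           (use jI n m Fi mu01 in auto)
      then show "?E (\<lambda>\<omega>. err t \<omega> m n) \<le> real t powr (- z / 2) + bT"
        unfolding err_def K_def by simp
    qed
    have Eterm: "\<And>t. t \<in> {1..T} \<Longrightarrow> ?E (\<lambda>\<omega>. util M (sopt t) (mu t) - util M (s t \<omega>) (mu t)) \<le>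
        real N * ?E (\<lambda>\<omega>. of_bool (UEx t \<omega>)) + 2 * real N * (real t powr (- z / 2) + bT)"
    proof -
      fix t assume t: "t \<in> {1..T}"
      have "?E (\<lambda>\<omega>. util M (sopt t) (mu t) - util M (s t \<omega>) (mu t)) \<le>
          ?E (\<lambda>\<omega>. real N * of_bool (UEx t \<omega>) + 2 / real M * (\<Sum>m\<in>{1..M}. \<Sum>n\<in>{1..N}. err t \<omega> m n))"
        by (intro integral_mono integrable_Pi_bool fin pw[OF t])
      also have "\<dots> = real N * ?E (\<lambda>\<omega>. of_bool (UEx t \<omega>)) +
          2 / real M * (\<Sum>m\<in>{1..M}. \<Sum>n\<in>{1..N}. ?E (\<lambda>\<omega>. err t \<omega> m n))"
        by (rule E_lin[OF fin])
      also have "\<dots> \<le> real N * ?E (\<lambda>\<omega>. of_bool (UEx t \<omega>)) +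
          2 / real M * (\<Sum>m\<in>{1..M}. \<Sum>n\<in>{1..N}. real t powr (- z / 2) + bT)"
        using Eerr[OF t] by (intro add_left_mono mult_left_mono sum_mono) auto
      also have "2 / real M * (\<Sum>m\<in>{1..M}. \<Sum>n\<in>{1..N}. real t powr (- z / 2) + bT)
          = 2 * real N * (real t powr (- z / 2) + bT)"
        using M by simp
      finally show "?thesis t" .
    qed
    have Kmono: "\<And>t. t \<in> {1..T} \<Longrightarrow> K (real t) \<le> K (real T)"
    proof -
      fix t assume t: "t \<in> {1..T}"
      have "real t powr z \<le> real T powr z" using t z by (intro powr_mono2) auto
      moreover have "ln (real t) \<le> ln (real T)" using t by simp
      moreover have "ln (real t) \<ge> 0" using t by simp
      ultimately show "K (real t) \<le> K (real T)" unfolding K_def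
        by (intro mult_mono) auto
    qed
    have card_bd: "\<And>\<omega>. (\<Sum>t\<in>{1..T}. (of_bool (UEx t \<omega>) :: real)) \<le>
        real N * real M * (real hT * real hT) * (real (nat \<lfloor>K (real T)\<rfloor>) + 1)"
    proof -
      fix \<omega>
      have "(\<Sum>t\<in>{1..T}. (of_bool (UEx t \<omega>) :: real)) = real (card ({1..T} \<inter> {t. UEx t \<omega>}))"
        by simp
      also have "{1..T} \<inter> {t. UEx t \<omega>} = {t\<in>{1..T}. UEx t \<omega>}" by auto
      also have "card {t\<in>{1..T}. UEx t \<omega>} \<le> N * M * (hT * hT) * (nat \<lfloor>K (real T)\<rfloor> + 1)"
        unfolding UEx_def s_def by (rule expl_count[where K=K and T=T, OF Nb hT1 Kmono])
      then have "real (card {t\<in>{1..T}. UEx t \<omega>}) \<le> real (N * M * (hT * hT) * (nat \<lfloor>K (real T)\<rfloor> + 1))"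
        by (simp only: of_nat_le_iff)
      finally show "?thesis \<omega>" by (simp add: algebra_simps)
    qed
    define X1 where "X1 = real N * (real N * real M * (real hT * real hT) * (real (nat \<lfloor>K (real T)\<rfloor>) + 1))"
    have sumE: "(\<Sum>t\<in>{1..T}. real N * ?E (\<lambda>\<omega>. of_bool (UEx t \<omega>))) \<le> X1"
    proof -
      have "(\<Sum>t\<in>{1..T}. real N * ?E (\<lambda>\<omega>. of_bool (UEx t \<omega>))) = real N * (\<Sum>t\<in>{1..T}. ?E (\<lambda>\<omega>. of_bool (UEx t \<omega>)))"
        by (simp add: sum_distrib_left)
      also have "(\<Sum>t\<in>{1..T}. ?E (\<lambda>\<omega>. of_bool (UEx t \<omega>))) = ?E (\<lambda>\<omega>. \<Sum>t\<in>{1..T}. (of_bool (UEx t \<omega>) :: real))"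
        by (rule Bochner_Integration.integral_sum[symmetric]) (simp add: fin)
      also have "\<dots> \<le> ?E (\<lambda>\<omega>. real N * real M * (real hT * real hT) * (real (nat \<lfloor>K (real T)\<rfloor>) + 1))"
        by (intro integral_mono integrable_Pi_bool fin card_bd)
      also have "\<dots> = real N * real M * (real hT * real hT) * (real (nat \<lfloor>K (real T)\<rfloor>) + 1)" by simp
      finally show ?thesis unfolding X1_def by (simp add: mult_left_mono)
    qed
    have main: "(\<Sum>t=1..T. ?E (\<lambda>\<omega>. util M (sopt t) (mu t) - util M (s t \<omega>) (mu t)))
        \<le> X1 + (\<Sum>t=1..T. 2 * real N * (real t powr (- z / 2) + bT))"
    proof -
      have "(\<Sum>t=1..T. ?E (\<lambda>\<omega>. util M (sopt t) (mu t) - util M (s t \<omega>) (mu t)))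
          \<le> (\<Sum>t=1..T. real N * ?E (\<lambda>\<omega>. of_bool (UEx t \<omega>)) + 2 * real N * (real t powr (- z / 2) + bT))"
        by (rule sum_mono) (rule Eterm)
      also have "\<dots> = (\<Sum>t=1..T. real N * ?E (\<lambda>\<omega>. of_bool (UEx t \<omega>))) + (\<Sum>t=1..T. 2 * real N * (real t powr (- z / 2) + bT))"
        by (rule sum.distrib)
      finally show ?thesis using sumE by linarith
    qed
    have KT0: "K (real T) \<ge> 0" unfolding K_def using lnT by simp
    have kle: "real (nat \<lfloor>K (real T)\<rfloor>) \<le> real T powr z * ln (real T)"
      using KT0 unfolding K_def by linarith
    have h2: "real hT * real hT \<le> 4 * real T powr (2 * \<gamma>)"
    proof -
      have "real hT * real hT \<le> (2 * real T powr \<gamma>) * (2 * real T powr \<gamma>)"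
        using hTle by (intro mult_mono) auto
      also have "\<dots> = 4 * (real T powr \<gamma> * real T powr \<gamma>)" by simp
      also have "real T powr \<gamma> * real T powr \<gamma> = real T powr (2 * \<gamma>)"
        by (simp add: powr_add[symmetric])
      finally show ?thesis .
    qed
    define Y where "Y = real T powr (z + 2 * \<gamma>) * ln (real T) + real T powr (2 * \<gamma>)"
    have Y0: "Y \<ge> 0" unfolding Y_def using lnT by simp
    have X1le: "X1 \<le> 4 * real N ^ 2 * real M * Y"
    proof -
      have "X1 \<le> real N * (real N * real M * (4 * real T powr (2 * \<gamma>)) * (real T powr z * ln (real T) + 1))"
      proof -
        have a: "real N * real M * (real hT * real hT) \<le> real N * real M * (4 * real T powr (2 * \<gamma>))"
          using h2 by (intro mult_left_mono) auto
        have b: "real (nat \<lfloor>K (real T)\<rfloor>) + 1 \<le> real T powr z * ln (real T) + 1" using kle by simp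
        have "real N * real M * (real hT * real hT) * (real (nat \<lfloor>K (real T)\<rfloor>) + 1)
            \<le> real N * real M * (4 * real T powr (2 * \<gamma>)) * (real T powr z * ln (real T) + 1)"
          by (rule mult_mono[OF a b]) auto
        then show ?thesis unfolding X1_def by (intro mult_left_mono) auto
      qed
      also have "\<dots> = 4 * real N ^ 2 * real M * (real T powr z * real T powr (2 * \<gamma>) * ln (real T) + real T powr (2 * \<gamma>))"
        by (simp add: power2_eq_square algebra_simps)
      also have "real T powr z * real T powr (2 * \<gamma>) = real T powr (z + 2 * \<gamma>)"
        by (simp add: powr_add)
      finally show ?thesis unfolding Y_def .
    qed
    have term1: "4 * real N ^ 2 * real M * Y \<le> 4 * real N ^ 2 * real M * B / cmin * Y"
    proof -
      have "4 * real N ^ 2 * real M * Y * 1 \<le> 4 * real N ^ 2 * real M * Y * r"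
        using r1' Y0 by (intro mult_left_mono) auto
      then show ?thesis by (simp add: r_def mult.commute mult.left_commute)
    qed
    have Mr: "1 \<le> real M * r"
    proof -
      have "1 * 1 \<le> real M * r" using M r1' by (intro mult_mono) auto
      then show ?thesis by simp
    qed
    have scale: "\<And>x. x \<ge> 0 \<Longrightarrow> real N * x \<le> real N * real M * B / cmin * x"
    proof -
      fix x :: real assume x: "x \<ge> 0"
      have "real N * x * 1 \<le> real N * x * (real M * r)" using Mr x by (intro mult_left_mono) auto
      then show "real N * x \<le> real N * real M * B / cmin * x" by (simp add: r_def algebra_simps)
    qed
    have per_t: "\<And>t. t \<in> {1..T} \<Longrightarrow> 2 * real N * (real t powr (- z / 2) + bT) \<le> A * real t powr \<theta>"
    proof -
      fix t assume t: "t \<in> {1..T}"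
      have a1: "real N * real t powr (- z / 2) \<le> real N * real M * B / cmin * real t powr (- z / 2)"
        by (rule scale) simp
      have a2: "real N * bT \<le> real N * real M * B / cmin * bT" by (rule scale[OF bT0])
      have a3: "real N * real M * B / cmin * bT = real N * real M * B / cmin * L * 2 powr (\<alpha> / 2) * real hT powr (- \<alpha>)"
        unfolding bT_def by (simp add: algebra_simps)
      have "2 * real N * (real t powr (- z / 2) + bT) = 2 * (real N * real t powr (- z / 2)) + 2 * (real N * bT)"
        by (simp add: algebra_simps)
      also have "\<dots> \<le> 2 * H t + 2 * real N * real M * B / cmin * L * 2 powr (\<alpha> / 2) * real hT powr (- \<alpha>)"
        using a1 a2 a3 H t by fastforce
      also have "\<dots> \<le> A * real t powr \<theta>" using HA t by blast
      finally show "?thesis t" .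
    qed
    have term4: "(\<Sum>t=1..T. 2 * real N * (real t powr (- z / 2) + bT)) \<le> A / (1 + \<theta>) * real T powr (1 + \<theta>)"
    proof -
      have "(\<Sum>t=1..T. 2 * real N * (real t powr (- z / 2) + bT)) \<le> (\<Sum>t=1..T. A * real t powr \<theta>)"
        by (rule sum_mono) (rule per_t)
      also have "\<dots> = A * (\<Sum>t=1..T. real t powr \<theta>)" by (simp add: sum_distrib_left)
      also have "\<dots> \<le> A * (real T powr (1 + \<theta>) / (1 + \<theta>))"
        using A \<theta> by (intro mult_left_mono sum_powr_le) auto
      finally show ?thesis by simp
    qed
    show ?thesis unfolding LHS using main X1le term1 term4 t2 t3 unfolding Y_def by linarith
  qed
qed


end
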